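(* The CircuITS model is marginalization consistent: for every observation set $\mathcal{X}$, every forecasting query $\mathcal{Q}$ with targets $\mathbf{y}$, and every subset $\mathbf{y}_A\subset\mathbf{y}$ of targets with corresponding queries $\mathcal{Q}_A$, $$\int p(\mathbf{y}\mid\mathcal{Q},\mathcal{X})\,d\mathbf{y}_A=p(\mathbf{y}\setminus\mathbf{y}_A\mid\mathcal{Q}\setminus\mathcal{Q}_A,\mathcal{X}).$$
   Context: Data: observations $\mathcal{X}=((t_n,c_n,y_n))_{n=1}^N\subset\mathbb{R}\times\{1,\dots,C\}\times\mathbb{R}$; query $\mathcal{Q}=((t_m^{\mathrm{qry}},c_m^{\mathrm{qry}}))_m$ with targets $\mathbf{y}$; $\mathcal{Q}_c,\mathbf{y}_c$ are the queries/targets of channel $c$. CircuITS defines $p(\mathbf{y}\mid\mathcal{Q},\mathcal{X})$ as follows. Fix $K\ge1$ and an ordering of channels $1,\dots,C$. Leaves: for each channel $c$ and component $k\in\{1,\dots,K\}$ a leaf density $p_{c,k}(\mathbf{y}_c)=\big(\prod_{i}f(y_i;\theta_i^k)\big)|R^{c,k}|^{-1/2}\exp(-\frac12\mathbf{z}^\top((R^{c,k})^{-1}-I)\mathbf{z})$ with $z_i=\Phi^{-1}(F(y_i;\theta_i^k))$ ($\Phi$ the standard normal CDF), where $F(\cdot;\theta)=f_L\circ\dots\circ f_1$, $f_l(x)=\sigma(A_lx+b_l)$ with positive weights (a strictly increasing differentiable CDF, density $f=\partial F/\partial y$); $R^{c,k}_{ij}=\mathbf{v}_i^\top\mathbf{v}_j/H$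 for $i\ne j$, $R^{c,k}_{ii}=1$, $\mathbf{v}_i=\tanh(g(\mathbf{e}_i^k))\in\mathbb{R}^H$; $\mathbf{e}_i=\mathrm{Proj}([\phi(t_i^{\mathrm{qry}})\|\tilde{\mathbf{h}}_{c}])$ split into $K$ blocks $\mathbf{e}_i^k$, with $\tilde{\mathbf{h}}_c$ computed from $\mathcal{X}$ only and $\theta_i^k$ a function of $\mathbf{e}_i^k$ (fixed maps $\phi,\mathrm{Proj},g$). If $\mathcal{Q}_c$ is empty, $p_{c,k}\equiv1$. Recursion: $\phi^{(1)}_k=p_{1,k}(\mathbf{y}_1)$; for $c>1$, $\phi^{(c)}_k=\sum_{i,j=1}^K W^{(c)}_{(i,j),k}\,\phi^{(c-1)}_i\,p_{c,j}(\mathbf{y}_c)$ with $W^{(c)}_{(i,j),k}\ge0$, $\sum_{(i,j)}W^{(c)}_{(i,j),k}=1$; finally $p(\mathbf{y}\mid\mathcal{Q},\mathcal{X})=\sum_{k=1}^K w^{\mathrm{root}}_k\phi^{(C)}_k$ with $w^{\mathrm{root}}$ a probability vector. The weights $w^{\mathrm{root}}$ and $W^{(c)}$ are functions of $\mathcal{X}$ only, not of $\mathcal{Q}$. *)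

theory Defs
  imports "HOL-Probability.Probability"
begin

definition Phi :: "real \<Rightarrow> real" where
  "Phi x = (\<integral>t. indicator {..x} t * std_normal_density t \<partial>lborel)"

definition Phi_inv :: "real \<Rightarrow> real" where
  "Phi_inv u = (THE z. Phi z = u)"

definition det_on :: "'i set \<Rightarrow> ('i \<Rightarrow> 'i \<Rightarrow> real) \<Rightarrow> real" where
  "det_on J M = (\<Sum>p | p permutes J. of_int (sign p) * (\<Prod>i\<in>J. M i (p i)))"

definition inv_on :: "'i set \<Rightarrow> ('i \<Rightarrow> 'i \<Rightarrow> real) \<Rightarrow> ('i \<Rightarrow> 'i \<Rightarrow> real)" where
  "inv_on J M = (THE S. (\<forall>i\<in>J. \<forall>j\<in>J. (\<Sum>k\<in>J. M i k * S k j) = (if i = j then 1 else 0))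
                      \<and> (\<forall>i j. i \<notin> J \<or> j \<notin> J \<longrightarrow> S i j = 0))"

definition copula_leaf :: "'i set \<Rightarrow> ('i \<Rightarrow> real \<Rightarrow> real) \<Rightarrow> ('i \<Rightarrow> real \<Rightarrow> real)
     \<Rightarrow> ('i \<Rightarrow> 'i \<Rightarrow> real) \<Rightarrow> ('i \<Rightarrow> real) \<Rightarrow> real" where
  "copula_leaf J Fi fi R y =
     (if J = {} then 1 else
      (let z = (\<lambda>i. Phi_inv (Fi i (y i))); Ri = inv_on J R in
       (\<Prod>i\<in>J. fi i (y i)) / sqrt (det_on J R)
       * exp (- (1/2) * (\<Sum>i\<in>J. \<Sum>j\<in>J. z i * (Ri i j - (if i = j then 1 else 0)) * z j))))"

text \<open>Circuit recursion over channels 1..C; L c k is the leaf p_{c,k}(y_c),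
  W c (i,j) k the sum-node weights, components indexed 1..K.\<close>
fun circ :: "nat \<Rightarrow> (nat \<Rightarrow> nat \<times> nat \<Rightarrow> nat \<Rightarrow> real) \<Rightarrow> (nat \<Rightarrow> nat \<Rightarrow> real) \<Rightarrow> nat \<Rightarrow> nat \<Rightarrow> real" where
  "circ K W L 0 k = 1"
| "circ K W L (Suc 0) k = L 1 k"
| "circ K W L (Suc (Suc c)) k =
     (\<Sum>i\<in>{1..K}. \<Sum>j\<in>{1..K}. W (Suc (Suc c)) (i, j) k * circ K W L (Suc c) i * L (Suc (Suc c)) j)"

definition emb :: "(real \<Rightarrow> 'a) \<Rightarrow> ('a \<times> 'b \<Rightarrow> nat \<Rightarrow> 'e) \<Rightarrow> ('x \<Rightarrow> nat \<Rightarrow> 'b) \<Rightarrow> 'x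
     \<Rightarrow> nat \<Rightarrow> real \<Rightarrow> nat \<Rightarrow> 'e" where
  "emb \<phi> Proj htil X k t c = Proj (\<phi> t, htil X c) k"

definition corrR :: "('e \<Rightarrow> real^'h) \<Rightarrow> ('q \<Rightarrow> 'e) \<Rightarrow> 'q \<Rightarrow> 'q \<Rightarrow> real" where
  "corrR g e i j = (if i = j then 1 else
     inner (\<chi> l. tanh (g (e i) $ l)) (\<chi> l. tanh (g (e j) $ l)) / real CARD('h))"

text \<open>The CircuITS density p(y | Q, X) for query set I (query i at time qt i,
  channel qc i), targets y.\<close>
definition circuits_density ::
  "nat \<Rightarrow> nat \<Rightarrow> (real \<Rightarrow> 'a) \<Rightarrow> ('a \<times> 'b \<Rightarrow> nat \<Rightarrow> 'e) \<Rightarrow> ('x \<Rightarrow> nat \<Rightarrow> 'b)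
   \<Rightarrow> ('e \<Rightarrow> real^'h) \<Rightarrow> ('e \<Rightarrow> 't) \<Rightarrow> ('t \<Rightarrow> real \<Rightarrow> real) \<Rightarrow> ('t \<Rightarrow> real \<Rightarrow> real)
   \<Rightarrow> ('x \<Rightarrow> nat \<Rightarrow> real) \<Rightarrow> ('x \<Rightarrow> nat \<Rightarrow> nat \<times> nat \<Rightarrow> nat \<Rightarrow> real)
   \<Rightarrow> 'x \<Rightarrow> ('q \<Rightarrow> real) \<Rightarrow> ('q \<Rightarrow> nat) \<Rightarrow> 'q set \<Rightarrow> ('q \<Rightarrow> real) \<Rightarrow> real" where
  "circuits_density C K \<phi> Proj htil g thetaMap Fc fd wroot W X qt qc I y =
     (let e = (\<lambda>k i. emb \<phi> Proj htil X k (qt i) (qc i));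
          leaf = (\<lambda>c k. copula_leaf {i\<in>I. qc i = c}
                           (\<lambda>i. Fc (thetaMap (e k i))) (\<lambda>i. fd (thetaMap (e k i)))
                           (corrR g (e k)) y)
      in (\<Sum>k\<in>{1..K}. wroot X k * circ K (W X) leaf C k))"

end

theory Submission
  imports Defs
begin

lemma phi_integrable: "integrable lborel (\<lambda>t. indicator S t * std_normal_density t)"
  if "S \<in> sets borel" for S :: "real set"
  using integrable_real_mult_indicator[of S lborel "std_normal_density"] that integrable_normal_density[of 1 0]
  by (simp add: mult.commute)

lemma phi_eq: "std_normal_density = (\<lambda>x. 1/sqrt(2*pi) * exp(-x\<^sup>2/2))"
  by (rule ext) (simp add: std_normal_density_def)

lemma phi_cont: "continuous_on S std_normal_density"
  unfolding phi_eq by (intro continuous_intros) auto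

lemma Phi_diff:
  assumes "x \<le> y"
  shows "Phi y - Phi x = integral {x..y} std_normal_density"
proof -
  have "Phi y - Phi x = (\<integral>t. indicator {..y} t * std_normal_density t - indicator {..x} t * std_normal_density t \<partial>lborel)"
    unfolding Phi_def by (rule Bochner_Integration.integral_diff[symmetric]) (auto intro: phi_integrable)
  also have "\<dots> = (\<integral>t. indicator {x..y} t * std_normal_density t \<partial>lborel)"
  proof (rule integral_cong_AE)
    show "AE t in lborel. indicator {..y} t * std_normal_density t - indicator {..x} t * std_normal_density t
        = indicator {x..y} t * std_normal_density t"
      using AE_lborel_singleton[of x]
      by eventually_elim (use assms in \<open>auto split: split_indicator\<close>)
  qed auto
  also have "\<dots> = (LINT t : {x..y} | lborel. std_normal_density t)"
    by (simp add: set_lebesgue_integral_def)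
  also have "\<dots> = integral {x..y} std_normal_density"
    by (rule set_borel_integral_eq_integral(2))
       (use phi_integrable[of "{x..y}"] in \<open>simp add: set_integrable_def mult.commute\<close>)
  finally show ?thesis .
qed

lemma Phi_deriv: "(Phi has_real_derivative std_normal_density t) (at t)"
proof -
  have c: "continuous_on {t-1..t+1} std_normal_density"
    by (rule phi_cont)
  have "((\<lambda>x. integral {t-1..x} std_normal_density) has_real_derivative std_normal_density t) (at t within {t-1..t+1})"
    by (rule integral_has_real_derivative[OF c]) auto
  hence "((\<lambda>x. Phi (t-1) + integral {t-1..x} std_normal_density) has_real_derivative std_normal_density t) (at t within {t-1..t+1})"
    by (auto intro!: derivative_eq_intros)
  hence d: "((\<lambda>x. Phi (t-1) + integral {t-1..x} std_normal_density) has_real_derivative std_normal_density t) (at t)"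
    by (subst (asm) at_within_interior) auto
  show ?thesis
  proof (rule has_field_derivative_transform_within_open[OF d, of "{t-1<..}"])
    fix x assume "x \<in> {t-1<..}"
    then show "Phi (t-1) + integral {t-1..x} std_normal_density = Phi x"
      using Phi_diff[of "t-1" x] by auto
  qed auto
qed

lemma Phi_cdf: "Phi x = cdf (density lborel std_normal_density) x"
proof -
  have "emeasure (density lborel std_normal_density) {..x}
      = (\<integral>\<^sup>+ t. ennreal (indicator {..x} t * std_normal_density t) \<partial>lborel)"
    by (subst emeasure_density) (auto intro!: nn_integral_cong split: split_indicator)
  also have "\<dots> = ennreal (Phi x)"
    unfolding Phi_def
    by (rule nn_integral_eq_integral) (auto intro: phi_integrable)
  finally show ?thesis
    unfolding cdf_def measure_def by (simp add: Phi_def)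
qed

lemma Phi_rd: "real_distribution (density lborel std_normal_density)"
  unfolding real_distribution_def real_distribution_axioms_def
  using prob_space_normal_density by auto

lemma Phi_top: "(Phi \<longlongrightarrow> 1) at_top"
proof -
  interpret N: real_distribution "density lborel std_normal_density" by (rule Phi_rd)
  show ?thesis using N.cdf_lim_at_top_prob by (simp add: Phi_cdf[abs_def])
qed

lemma Phi_bot: "(Phi \<longlongrightarrow> 0) at_bot"
proof -
  interpret N: real_distribution "density lborel std_normal_density" by (rule Phi_rd)
  show ?thesis using N.cdf_lim_at_bot by (simp add: Phi_cdf[abs_def])
qed

lemma Phi_nonneg: "0 \<le> Phi x" and Phi_le1: "Phi x \<le> 1"
proof -
  interpret N: real_distribution "density lborel std_normal_density" by (rule Phi_rd)
  show "0 \<le> Phi x" "Phi x \<le> 1" using N.cdf_nonneg N.cdf_bounded_prob by (simp_all add: Phi_cdf)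
qed

lemma Phi_less: "x < y \<Longrightarrow> Phi x < Phi y"
  by (rule DERIV_pos_imp_increasing[of x y Phi])
     (auto intro!: exI[of _ "std_normal_density _"] Phi_deriv normal_density_pos)

lemma Phi_gt0: "0 < Phi x"
  using Phi_less[of "x-1" x] Phi_nonneg[of "x-1"] by simp

lemma Phi_lt1: "Phi x < 1"
  using Phi_less[of x "x+1"] Phi_le1[of "x+1"] by simp

lemma Phi_cont: "isCont Phi x"
  using Phi_deriv DERIV_isCont by blast

lemma Phi_surj: assumes "0 < u" "u < 1" shows "\<exists>z. Phi z = u"
proof -
  have "eventually (\<lambda>x. Phi x < u) at_bot"
    using order_tendstoD(2)[OF Phi_bot assms(1)] .
  then obtain a where a: "Phi a < u" by (auto simp: eventually_at_bot_linorder)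
  have "eventually (\<lambda>x. Phi x > u) at_top"
    using order_tendstoD(1)[OF Phi_top assms(2)] .
  then obtain b where b: "Phi b > u" by (auto simp: eventually_at_top_linorder)
  have "a \<le> b" using a b Phi_less[of b a] by (cases "a \<le> b") auto
  from IVT[of Phi a u b] a b this Phi_cont show ?thesis by auto
qed

lemma Phi_inj: "Phi x = Phi y \<Longrightarrow> x = y"
  using Phi_less[of x y] Phi_less[of y x] by (cases x y rule: linorder_cases) auto

lemma Phi_Phi_inv: assumes "0 < u" "u < 1" shows "Phi (Phi_inv u) = u"
proof -
  obtain z where "Phi z = u" using Phi_surj[OF assms] by blast
  then have "\<exists>!z. Phi z = u" using Phi_inj by blast
  then show ?thesis unfolding Phi_inv_def by (rule theI')
qed

lemma Phi_inv_Phi: "Phi_inv (Phi z) = z"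
  unfolding Phi_inv_def by (rule the_equality) (auto intro: Phi_inj)

lemma Phi_inv_cont: assumes "0 < u" "u < 1" shows "isCont Phi_inv u"
proof -
  obtain z where z: "Phi z = u" using Phi_surj[OF assms] by blast
  have "isCont Phi_inv (Phi z)"
    by (rule isCont_inverse_function[of 1]) (auto simp: Phi_inv_Phi Phi_cont)
  then show ?thesis using z by simp
qed

lemma Phi_inv_deriv: assumes "0 < u" "u < 1"
  shows "(Phi_inv has_real_derivative inverse (std_normal_density (Phi_inv u))) (at u)"
proof (rule DERIV_inverse_function[where f=Phi and g=Phi_inv and x=u and a=0 and b=1])
  show "(Phi has_real_derivative std_normal_density (Phi_inv u)) (at (Phi_inv u))" by (rule Phi_deriv)
  show "std_normal_density (Phi_inv u) \<noteq> 0" using normal_density_pos[of 1 0 "Phi_inv u"] by simp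
  show "\<And>y. 0 < y \<Longrightarrow> y < 1 \<Longrightarrow> Phi (Phi_inv y) = y" by (rule Phi_Phi_inv)
  show "isCont Phi_inv u" using Phi_inv_cont assms by blast
qed (use assms in auto)


definition cdf_like :: "(real \<Rightarrow> real) \<Rightarrow> (real \<Rightarrow> real) \<Rightarrow> bool" where
  "cdf_like F f \<longleftrightarrow> strict_mono F \<and> (\<forall>x. (F has_real_derivative f x) (at x)) \<and> continuous_on UNIV f
     \<and> (F \<longlongrightarrow> 0) at_bot \<and> (F \<longlongrightarrow> 1) at_top"

context
  fixes F f :: "real \<Rightarrow> real"
  assumes cl: "cdf_like F f"
begin

lemma cl_mono: "strict_mono F" and cl_deriv: "(F has_real_derivative f x) (at x)"
  and cl_cont: "continuous_on S f" and cl_bot: "(F \<longlongrightarrow> 0) at_bot" and cl_top: "(F \<longlongrightarrow> 1) at_top"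
  using cl unfolding cdf_like_def by (auto intro: continuous_on_subset)

lemma cl_ge0: "0 \<le> F x"
proof (rule tendsto_upperbound[OF cl_bot])
  show "eventually (\<lambda>s. F s \<le> F x) at_bot"
    unfolding eventually_at_bot_linorder
    by (rule exI[of _ x]) (auto intro: strict_mono_mono[OF cl_mono, THEN monoD])
qed simp

lemma cl_le1: "F x \<le> 1"
proof (rule tendsto_lowerbound[OF cl_top])
  show "eventually (\<lambda>s. F x \<le> F s) at_top"
    unfolding eventually_at_top_linorder
    by (rule exI[of _ x]) (auto intro: strict_mono_mono[OF cl_mono, THEN monoD])
qed simp

lemma cl_gt0: "0 < F x"
  using cl_ge0[of "x-1"] strict_monoD[OF cl_mono, of "x-1" x] by simp

lemma cl_lt1: "F x < 1"
  using cl_le1[of "x+1"] strict_monoD[OF cl_mono, of x "x+1"] by simp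

lemma cl_f_nonneg: "0 \<le> f x"
  by (rule mono_on_imp_deriv_nonneg[of UNIV F, OF _ cl_deriv])
     (auto simp: mono_on_def intro: strict_mono_mono[OF cl_mono, THEN monoD])

lemma cl_isCont: "isCont F x"
  using cl_deriv DERIV_isCont by blast

lemma zq_deriv: "((\<lambda>t. Phi_inv (F t)) has_real_derivative f t * inverse (std_normal_density (Phi_inv (F t)))) (at t)"
  using DERIV_chain2[OF Phi_inv_deriv[OF cl_gt0 cl_lt1] cl_deriv] by (simp add: mult.commute)

lemma zq_isCont: "isCont (\<lambda>t. Phi_inv (F t)) t"
  using zq_deriv DERIV_isCont by blast

lemma zq_cont: "continuous_on S (\<lambda>t. Phi_inv (F t))"
  using zq_isCont by (simp add: continuous_at_imp_continuous_on)

lemma zq_meas: "(\<lambda>t. Phi_inv (F t)) \<in> borel_measurable borel"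
  by (rule borel_measurable_continuous_onI[OF zq_cont])

lemma f_meas: "f \<in> borel_measurable borel"
  by (rule borel_measurable_continuous_onI[OF cl_cont])

lemma zq_top: "filterlim (\<lambda>t. Phi_inv (F t)) at_top at_top"
  unfolding filterlim_at_top
proof
  fix Z :: real
  have "eventually (\<lambda>t. F t > Phi Z) at_top"
    using order_tendstoD(1)[OF cl_top Phi_lt1] .
  then show "eventually (\<lambda>t. Z \<le> Phi_inv (F t)) at_top"
  proof eventually_elim
    case (elim t)
    then have "Phi Z < Phi (Phi_inv (F t))" using Phi_Phi_inv[OF cl_gt0 cl_lt1] by simp
    then show ?case using Phi_less[of "Phi_inv (F t)" Z] by (cases "Z \<le> Phi_inv (F t)") auto
  qed
qed

lemma zq_bot: "filterlim (\<lambda>t. Phi_inv (F t)) at_bot at_bot"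
  unfolding filterlim_at_bot
proof
  fix Z :: real
  have "eventually (\<lambda>t. F t < Phi Z) at_bot"
    using order_tendstoD(2)[OF cl_bot Phi_gt0] .
  then show "eventually (\<lambda>t. Phi_inv (F t) \<le> Z) at_bot"
  proof eventually_elim
    case (elim t)
    then have "Phi (Phi_inv (F t)) < Phi Z" using Phi_Phi_inv[OF cl_gt0 cl_lt1] by simp
    then show ?case using Phi_less[of Z "Phi_inv (F t)"] by (cases "Phi_inv (F t) \<le> Z") auto
  qed
qed

end

lemma nn_FTC_real:
  fixes f K :: "real \<Rightarrow> real"
  assumes fm[measurable]: "f \<in> borel_measurable borel"
    and d: "\<And>x. (K has_real_derivative f x) (at x)"
    and nn: "\<And>x. 0 \<le> f x"
    and A: "(K \<longlongrightarrow> A) at_bot" and B: "(K \<longlongrightarrow> B) at_top"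
  shows "(\<integral>\<^sup>+ x. ennreal (f x) \<partial>lborel) = ennreal (B - A)"
proof -
  let ?g = "\<lambda>(n::nat) x. ennreal (f x) * indicator {- real n..real n} x"
  have Kmono: "x \<le> y \<Longrightarrow> K x \<le> K y" for x y
    by (rule DERIV_nonneg_imp_nondecreasing[of x y K]) (use d nn in auto)
  have lim1: "(\<lambda>n. integral\<^sup>N lborel (?g n)) \<longlonglongrightarrow> (\<integral>\<^sup>+ x. ennreal (f x) \<partial>lborel)"
  proof (rule nn_integral_LIMSEQ)
    show "incseq ?g"
      by (auto simp: incseq_def le_fun_def split: split_indicator)
    show "?g i \<in> borel_measurable lborel" for i by measurable
    fix x
    obtain n where "\<bar>x\<bar> < real n" using reals_Archimedean2 by blast
    then have "eventually (\<lambda>i. ?g i x = ennreal (f x)) sequentially"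
      by (auto simp: eventually_sequentially split: split_indicator intro!: exI[of _ n])
    then show "(\<lambda>i. ?g i x) \<longlonglongrightarrow> ennreal (f x)"
      by (rule tendsto_eventually)
  qed
  have eq: "integral\<^sup>N lborel (?g n) = ennreal (K (real n) - K (- real n))" for n
    by (rule nn_integral_FTC_Icc[OF fm]) (use d nn in auto)
  have "(\<lambda>n. K (real n)) \<longlonglongrightarrow> B"
    by (rule filterlim_compose[OF B filterlim_real_sequentially])
  moreover have "(\<lambda>n. K (- real n)) \<longlonglongrightarrow> A"
    by (rule filterlim_compose[OF A]) (auto intro: filterlim_compose[OF filterlim_uminus_at_bot_at_top filterlim_real_sequentially])
  ultimately have "(\<lambda>n. ennreal (K (real n) - K (- real n))) \<longlonglongrightarrow> ennreal (B - A)"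
    by (intro tendsto_ennrealI tendsto_diff)
  with lim1 show ?thesis unfolding eq using LIMSEQ_unique by blast
qed


lemma gauss_alg:
  fixes p b z f :: real
  assumes p: "p > 0"
  shows "exp (b\<^sup>2/(2*p)) / sqrt p * (std_normal_density (sqrt p * (z + b/p)) * (sqrt p * (f * inverse (std_normal_density z))))
       = f * exp (-((p-1)*z\<^sup>2 + 2*b*z)/2)"
proof -
  have s: "sqrt p > 0" "(sqrt p)\<^sup>2 = p" using p by auto
  have e: "(sqrt p * (z + b/p))\<^sup>2 = p*z\<^sup>2 + 2*b*z + b\<^sup>2/p"
    using p by (simp add: power_mult_distrib s(2) power2_eq_square field_simps)
  have "exp (b\<^sup>2/(2*p)) / sqrt p * (std_normal_density (sqrt p * (z + b/p)) * (sqrt p * (f * inverse (std_normal_density z))))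
      = f * (exp (b\<^sup>2/(2*p)) * exp (- (p*z\<^sup>2 + 2*b*z + b\<^sup>2/p) / 2) * exp (z\<^sup>2 / 2))"
    unfolding std_normal_density_def e using s
    by (simp add: field_simps exp_minus)
  also have "exp (b\<^sup>2/(2*p)) * exp (- (p*z\<^sup>2 + 2*b*z + b\<^sup>2/p) / 2) * exp (z\<^sup>2 / 2)
      = exp (b\<^sup>2/(2*p) + (- (p*z\<^sup>2 + 2*b*z + b\<^sup>2/p) / 2) - (- z\<^sup>2 / 2))"
    by (simp add: exp_add)
  also have "b\<^sup>2/(2*p) + (- (p*z\<^sup>2 + 2*b*z + b\<^sup>2/p) / 2) - (- z\<^sup>2 / 2) = -((p-1)*z\<^sup>2 + 2*b*z)/2"
    using p by (simp add: field_simps)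
  finally show ?thesis .
qed

lemma gauss_step:
  assumes cl: "cdf_like F f" and p: "p > 0"
  shows "(\<integral>\<^sup>+ t. ennreal (f t * exp (-((p-1)*(Phi_inv (F t))\<^sup>2 + 2*b*Phi_inv (F t))/2)) \<partial>lborel)
       = ennreal (exp (b\<^sup>2/(2*p)) / sqrt p)"
proof -
  define c where "c = exp (b\<^sup>2/(2*p)) / sqrt p"
  define zq where "zq = (\<lambda>t. Phi_inv (F t))"
  define w where "w = (\<lambda>t. sqrt p * (zq t + b/p))"
  define K where "K = (\<lambda>t. c * Phi (w t))"
  have wd: "(w has_real_derivative sqrt p * (f t * inverse (std_normal_density (zq t)))) (at t)" for t
    unfolding w_def zq_def by (auto intro!: derivative_eq_intros zq_deriv[OF cl])
  have Kd: "(K has_real_derivative f t * exp (-((p-1)*(zq t)\<^sup>2 + 2*b*zq t)/2)) (at t)" for t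
  proof -
    have "(K has_real_derivative c * (std_normal_density (w t) * (sqrt p * (f t * inverse (std_normal_density (zq t)))))) (at t)"
      unfolding K_def by (intro DERIV_cmult DERIV_chain2[OF Phi_deriv wd])
    then show ?thesis unfolding c_def w_def using gauss_alg[OF p] by simp
  qed
  have wtop: "filterlim w at_top at_top"
    unfolding filterlim_at_top
  proof
    fix Z
    have "eventually (\<lambda>t. Z / sqrt p - b/p \<le> zq t) at_top"
      using zq_top[OF cl] unfolding filterlim_at_top zq_def by blast
    then show "eventually (\<lambda>t. Z \<le> w t) at_top"
    proof eventually_elim
      case (elim t)
      then have "Z / sqrt p \<le> zq t + b/p" by simp
      then have "sqrt p * (Z / sqrt p) \<le> sqrt p * (zq t + b/p)" using p by (intro mult_left_mono) auto
      then show ?case using p by (simp add: w_def)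
    qed
  qed
  have wbot: "filterlim w at_bot at_bot"
    unfolding filterlim_at_bot
  proof
    fix Z
    have "eventually (\<lambda>t. zq t \<le> Z / sqrt p - b/p) at_bot"
      using zq_bot[OF cl] unfolding filterlim_at_bot zq_def by blast
    then show "eventually (\<lambda>t. w t \<le> Z) at_bot"
    proof eventually_elim
      case (elim t)
      then have "zq t + b/p \<le> Z / sqrt p" by simp
      then have "sqrt p * (zq t + b/p) \<le> sqrt p * (Z / sqrt p)" using p by (intro mult_left_mono) auto
      then show ?case using p by (simp add: w_def)
    qed
  qed
  have Ktop: "(K \<longlongrightarrow> c * 1) at_top"
    unfolding K_def by (intro tendsto_mult tendsto_const filterlim_compose[OF Phi_top wtop])
  have Kbot: "(K \<longlongrightarrow> c * 0) at_bot"
    unfolding K_def by (intro tendsto_mult tendsto_const filterlim_compose[OF Phi_bot wbot])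
  have meas: "(\<lambda>t. f t * exp (-((p-1)*(zq t)\<^sup>2 + 2*b*zq t)/2)) \<in> borel_measurable borel"
    using f_meas[OF cl] zq_meas[OF cl] unfolding zq_def by measurable
  have nn: "0 \<le> f t * exp (-((p-1)*(zq t)\<^sup>2 + 2*b*zq t)/2)" for t
    using cl_f_nonneg[OF cl] by simp
  from nn_FTC_real[OF meas Kd nn Kbot Ktop] show ?thesis by (simp add: c_def zq_def)
qed


definition pd_on :: "'i set \<Rightarrow> ('i \<Rightarrow> 'i \<Rightarrow> real) \<Rightarrow> bool" where
  "pd_on J R \<longleftrightarrow> (\<forall>i\<in>J. \<forall>j\<in>J. R i j = R j i)
     \<and> (\<forall>x. (\<exists>i\<in>J. x i \<noteq> 0) \<longrightarrow> 0 < (\<Sum>i\<in>J. \<Sum>j\<in>J. x i * R i j * x j))"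

definition is_inv :: "'i set \<Rightarrow> ('i \<Rightarrow> 'i \<Rightarrow> real) \<Rightarrow> ('i \<Rightarrow> 'i \<Rightarrow> real) \<Rightarrow> bool" where
  "is_inv J R S \<longleftrightarrow> (\<forall>i\<in>J. \<forall>j\<in>J. (\<Sum>k\<in>J. R i k * S k j) = (if i = j then 1 else 0))
                      \<and> (\<forall>i j. i \<notin> J \<or> j \<notin> J \<longrightarrow> S i j = 0)"

lemma pd_sym: "pd_on J R \<Longrightarrow> i \<in> J \<Longrightarrow> j \<in> J \<Longrightarrow> R i j = R j i"
  unfolding pd_on_def by blast

lemma pd_pos: "pd_on J R \<Longrightarrow> i \<in> J \<Longrightarrow> x i \<noteq> 0 \<Longrightarrow> 0 < (\<Sum>i\<in>J. \<Sum>j\<in>J. x i * R i j * x j)"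
  unfolding pd_on_def by blast

lemma pd_subset:
  assumes fin: "finite J" and pd: "pd_on J R" and sub: "J' \<subseteq> J"
  shows "pd_on J' R"
  unfolding pd_on_def
proof (intro conjI allI impI ballI)
  fix i j assume "i \<in> J'" "j \<in> J'" then show "R i j = R j i" using pd sub unfolding pd_on_def by blast
next
  fix x :: "'a \<Rightarrow> real" assume ex: "\<exists>i\<in>J'. x i \<noteq> 0"
  define x' where "x' = (\<lambda>i. if i \<in> J' then x i else 0)"
  have "(\<Sum>i\<in>J. \<Sum>j\<in>J. x' i * R i j * x' j) = (\<Sum>i\<in>J'. \<Sum>j\<in>J. x' i * R i j * x' j)"
    by (rule sum.mono_neutral_right[OF fin sub]) (auto simp: x'_def)
  also have "\<dots> = (\<Sum>i\<in>J'. \<Sum>j\<in>J'. x i * R i j * x j)"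
    by (rule sum.cong[OF refl], rule sum.mono_neutral_cong_right[OF fin sub]) (auto simp: x'_def)
  finally have eq: "(\<Sum>i\<in>J. \<Sum>j\<in>J. x' i * R i j * x' j) = (\<Sum>i\<in>J'. \<Sum>j\<in>J'. x i * R i j * x j)" .
  from ex obtain i where "i \<in> J'" "x i \<noteq> 0" by blast
  then have "0 < (\<Sum>i\<in>J. \<Sum>j\<in>J. x' i * R i j * x' j)"
    using sub by (intro pd_pos[OF pd, of i]) (auto simp: x'_def)
  then show "0 < (\<Sum>i\<in>J'. \<Sum>j\<in>J'. x i * R i j * x j)" using eq by simp
qed

lemma quad_eq: "(\<Sum>i\<in>J. \<Sum>j\<in>J. x i * R i j * x j) = (\<Sum>i\<in>J. x i * (\<Sum>j\<in>J. R i j * (x j :: real)))"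
  by (simp add: sum_distrib_left mult.assoc)

lemma delta_sum: "finite J \<Longrightarrow> i \<in> J \<Longrightarrow> (\<Sum>m\<in>J. (if i = m then 1 else 0) * g m) = (g i :: real)"
  by (simp add: if_distrib[of "\<lambda>x. x * _"] cong: if_cong)

lemma delta_sum': "finite J \<Longrightarrow> i \<in> J \<Longrightarrow> (\<Sum>m\<in>J. g m * (if m = i then 1 else 0)) = (g i :: real)"
  by (simp add: if_distrib[of "\<lambda>x. _ * x"] cong: if_cong)

lemma is_inv_unique:
  assumes fin: "finite J" and pd: "pd_on J R" and S1: "is_inv J R S1" and S2: "is_inv J R S2"
  shows "S1 = S2"
proof (intro ext)
  fix k j
  show "S1 k j = S2 k j"
  proof (cases "k \<in> J \<and> j \<in> J")
    case False then show ?thesis using S1 S2 by (auto simp: is_inv_def)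
  next
    case True
    define x where "x = (\<lambda>k. S1 k j - S2 k j)"
    have Rx: "(\<Sum>m\<in>J. R i m * x m) = 0" if "i \<in> J" for i
      using S1 S2 that True by (simp add: is_inv_def x_def right_diff_distrib sum_subtractf)
    have "(\<Sum>i\<in>J. \<Sum>m\<in>J. x i * R i m * x m) = 0"
      unfolding quad_eq using Rx by simp
    then have "\<not> (x k \<noteq> 0)" using pd_pos[OF pd, of k x] True by auto
    then show ?thesis by (simp add: x_def)
  qed
qed

lemma is_inv_exists:
  assumes fin: "finite J" and pd: "pd_on J R"
  shows "\<exists>S. is_inv J R S"
  using fin pd
proof (induction J rule: finite_induct)
  case empty
  show ?case by (rule exI[of _ "\<lambda>_ _. 0"]) (simp add: is_inv_def)
next
  case (insert a J')
  have pdJ': "pd_on J' R" using pd_subset[OF _ insert.prems] insert.hyps by auto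
  obtain P' where P': "is_inv J' R P'" using insert.IH[OF pdJ'] by blast
  have P'1: "(\<Sum>k\<in>J'. R i k * P' k j) = (if i = j then 1 else 0)" if "i \<in> J'" "j \<in> J'" for i j
    using P' that by (simp add: is_inv_def)
  define w where "w = (\<lambda>i. \<Sum>k\<in>J'. P' i k * R k a)"
  define r where "r = (\<lambda>j. \<Sum>k\<in>J'. R a k * P' k j)"
  define s where "s = R a a - (\<Sum>k\<in>J'. R a k * w k)"
  have F1: "(\<Sum>k\<in>J'. R i k * w k) = R i a" if i: "i \<in> J'" for i
  proof -
    have "(\<Sum>k\<in>J'. R i k * w k) = (\<Sum>k\<in>J'. \<Sum>m\<in>J'. R i k * P' k m * R m a)"
      by (simp add: w_def sum_distrib_left mult.assoc)
    also have "\<dots> = (\<Sum>m\<in>J'. (\<Sum>k\<in>J'. R i k * P' k m) * R m a)"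
      by (subst sum.swap) (simp add: sum_distrib_right)
    also have "\<dots> = (\<Sum>m\<in>J'. (if i = m then 1 else 0) * R m a)"
      using P'1 i by simp
    also have "\<dots> = R i a" using i insert.hyps by (simp add: delta_sum)
    finally show ?thesis .
  qed
  have F2: "(\<Sum>k\<in>J'. R a k * P' k j) = r j" for j by (simp add: r_def)
  have spos: "s > 0"
  proof -
    define v where "v = (\<lambda>k. if k = a then 1 else if k \<in> J' then - w k else (0::real))"
    have vJ: "(\<Sum>j\<in>J'. R i j * v j) = - (\<Sum>j\<in>J'. R i j * w j)" for i
      by (subst sum_negf[symmetric]) (rule sum.cong, use insert.hyps in \<open>auto simp: v_def\<close>)
    have Rv1: "(\<Sum>j\<in>insert a J'. R i j * v j) = 0" if "i \<in> J'" for i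
    proof -
      have "(\<Sum>j\<in>insert a J'. R i j * v j) = R i a - (\<Sum>j\<in>J'. R i j * w j)"
        using insert.hyps vJ by (simp add: v_def)
      then show ?thesis using F1 that by simp
    qed
    have Rv2: "(\<Sum>j\<in>insert a J'. R a j * v j) = s"
    proof -
      have "(\<Sum>j\<in>insert a J'. R a j * v j) = R a a - (\<Sum>j\<in>J'. R a j * w j)"
        using insert.hyps vJ by (simp add: v_def)
      then show ?thesis by (simp add: s_def)
    qed
    have "(\<Sum>i\<in>insert a J'. \<Sum>j\<in>insert a J'. v i * R i j * v j) = s"
      unfolding quad_eq using insert.hyps Rv1 Rv2 by (simp add: v_def)
    moreover have "0 < (\<Sum>i\<in>insert a J'. \<Sum>j\<in>insert a J'. v i * R i j * v j)"
      by (rule pd_pos[OF insert.prems, of a]) (auto simp: v_def)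
    ultimately show ?thesis by simp
  qed
  define S where "S = (\<lambda>i j. if i = a \<and> j = a then 1/s
      else if i = a \<and> j \<in> J' then - r j / s
      else if i \<in> J' \<and> j = a then - w i / s
      else if i \<in> J' \<and> j \<in> J' then P' i j + w i * r j / s else 0)"
  have aJ: "a \<notin> J'" by (rule insert.hyps)
  have "is_inv (insert a J') R S"
    unfolding is_inv_def
  proof (intro conjI allI impI ballI)
    fix i j assume "i \<notin> insert a J' \<or> j \<notin> insert a J'" then show "S i j = 0" by (auto simp: S_def)
  next
    fix i j assume i: "i \<in> insert a J'" and j: "j \<in> insert a J'"
    have split: "(\<Sum>k\<in>insert a J'. R i k * S k j) = R i a * S a j + (\<Sum>k\<in>J'. R i k * S k j)"
      using insert.hyps by simp
    show "(\<Sum>k\<in>insert a J'. R i k * S k j) = (if i = j then 1 else 0)"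
    proof (cases "j = a")
      case ja: True
      have Sk: "k \<in> J' \<Longrightarrow> R i k * S k j = - (R i k * w k) / s" for k
        using aJ ja by (auto simp: S_def)
      have "(\<Sum>k\<in>J'. R i k * S k j) = (\<Sum>k\<in>J'. - (R i k * w k) / s)"
        using Sk by (rule sum.cong[OF refl])
      also have "\<dots> = - (\<Sum>k\<in>J'. R i k * w k) / s"
        by (simp add: sum_divide_distrib sum_negf)
      finally have sumJ: "(\<Sum>k\<in>J'. R i k * S k j) = - (\<Sum>k\<in>J'. R i k * w k) / s" .
      have Saa: "S a a = 1/s" by (simp add: S_def)
      have Raa: "R a a = s + (\<Sum>k\<in>J'. R a k * w k)" by (simp add: s_def)
      show ?thesis
      proof (cases "i = a")
        case True
        have "(\<Sum>k\<in>insert a J'. R i k * S k j) = (s + (\<Sum>k\<in>J'. R a k * w k)) * (1/s) + - (\<Sum>k\<in>J'. R a k * w k) / s"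
          using split sumJ True ja Saa Raa by simp
        also have "\<dots> = 1" using spos by (simp add: field_simps)
        finally show ?thesis using True ja by simp
      next
        case False
        then have iJ: "i \<in> J'" using i by simp
        have "(\<Sum>k\<in>insert a J'. R i k * S k j) = R i a * (1/s) + - R i a / s"
          using split sumJ ja Saa F1[OF iJ] by simp
        also have "\<dots> = 0" by simp
        finally show ?thesis using False ja by simp
      qed
    next
      case jn: False
      then have jJ: "j \<in> J'" using j by simp
      have Sk: "k \<in> J' \<Longrightarrow> R i k * S k j = R i k * P' k j + (R i k * w k) * (r j / s)" for k
        using aJ jn jJ by (auto simp: S_def algebra_simps)
      have "(\<Sum>k\<in>J'. R i k * S k j) = (\<Sum>k\<in>J'. R i k * P' k j + (R i k * w k) * (r j / s))"
        using Sk by (rule sum.cong[OF refl])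
      also have "\<dots> = (\<Sum>k\<in>J'. R i k * P' k j) + (\<Sum>k\<in>J'. R i k * w k) * (r j / s)"
        by (simp only: sum.distrib sum_distrib_right)
      finally have sumJ: "(\<Sum>k\<in>J'. R i k * S k j) = (\<Sum>k\<in>J'. R i k * P' k j) + (\<Sum>k\<in>J'. R i k * w k) * (r j / s)" .
      have Saj: "S a j = - r j / s" using jJ aJ by (auto simp: S_def)
      have Raa: "R a a = s + (\<Sum>k\<in>J'. R a k * w k)" by (simp add: s_def)
      show ?thesis
      proof (cases "i = a")
        case True
        have "(\<Sum>k\<in>insert a J'. R i k * S k j)
            = (s + (\<Sum>k\<in>J'. R a k * w k)) * (- r j / s) + (r j + (\<Sum>k\<in>J'. R a k * w k) * (r j / s))"
          using split sumJ True Saj Raa F2 by simp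
        also have "\<dots> = 0" using spos by (simp add: field_simps)
        finally show ?thesis using True jn by simp
      next
        case False
        then have iJ: "i \<in> J'" using i by simp
        have "(\<Sum>k\<in>insert a J'. R i k * S k j)
            = R i a * (- r j / s) + ((if i = j then 1 else 0) + R i a * (r j / s))"
          using split sumJ Saj F1[OF iJ] P'1[OF iJ jJ] by simp
        also have "\<dots> = (if i = j then 1 else 0)" by simp
        finally show ?thesis .
      qed
    qed
  qed
  then show ?case by blast
qed

lemma inv_on_is_inv:
  assumes "finite J" "pd_on J R"
  shows "is_inv J R (inv_on J R)"
proof -
  obtain S where S: "is_inv J R S" using is_inv_exists[OF assms] by blast
  have "\<exists>!S. is_inv J R S" using S is_inv_unique[OF assms] by blast
  then show ?thesis unfolding inv_on_def is_inv_def[symmetric] by (rule theI')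
qed

lemma inv_on_eq:
  assumes "finite J" "pd_on J R" "is_inv J R S"
  shows "inv_on J R = S"
  using is_inv_unique[OF assms(1,2) inv_on_is_inv[OF assms(1,2)] assms(3)] .


definition colrep :: "('i \<Rightarrow> 'i \<Rightarrow> real) \<Rightarrow> 'i \<Rightarrow> ('i \<Rightarrow> real) \<Rightarrow> 'i \<Rightarrow> 'i \<Rightarrow> real" where
  "colrep M a c = (\<lambda>i j. if j = a then c i else M i j)"

lemma det_cong:
  assumes "\<And>i j. i \<in> J \<Longrightarrow> j \<in> J \<Longrightarrow> M i j = N i j"
  shows "det_on J M = det_on J N"
  unfolding det_on_def
  by (rule sum.cong[OF refl], rule arg_cong[where f="\<lambda>x. _ * x"], rule prod.cong[OF refl])
     (use assms permutes_in_image in fastforce)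

lemma det_equal_cols:
  assumes fin: "finite J" and a: "a \<in> J" and b: "b \<in> J" and ab: "a \<noteq> b"
    and eq: "\<And>i. i \<in> J \<Longrightarrow> M i a = M i b"
  shows "det_on J M = 0"
proof -
  let ?t = "Transposition.transpose a b"
  have t: "?t permutes J" using a b by (rule permutes_swap_id)
  let ?f = "\<lambda>p. of_int (sign p) * (\<Prod>i\<in>J. M i (p i))"
  have "det_on J M = (\<Sum>p\<in>{p. p permutes J}. ?f (?t \<circ> p))"
    unfolding det_on_def by (rule setum_permutations_compose_left[OF t])
  also have "\<dots> = (\<Sum>p\<in>{p. p permutes J}. - ?f p)"
  proof (rule sum.cong[OF refl])
    fix p assume "p \<in> {p. p permutes J}"
    then have p: "p permutes J" by simp
    have "sign (?t \<circ> p) = - sign p"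
      using sign_compose[OF permutes_imp_permutation[OF fin t] permutes_imp_permutation[OF fin p]]
      by (simp add: sign_swap_id ab)
    moreover have "(\<Prod>i\<in>J. M i ((?t \<circ> p) i)) = (\<Prod>i\<in>J. M i (p i))"
    proof (rule prod.cong[OF refl])
      fix i assume i: "i \<in> J"
      then have "p i \<in> J" using permutes_in_image[OF p] by simp
      then show "M i ((?t \<circ> p) i) = M i (p i)"
        using eq[OF i] by (auto simp: Transposition.transpose_def)
    qed
    ultimately show "?f (?t \<circ> p) = - ?f p" by simp
  qed
  also have "\<dots> = - det_on J M" unfolding det_on_def by (simp add: sum_negf)
  finally show ?thesis by simp
qed

lemma prod_col:
  assumes fin: "finite J" and p: "p permutes J" and a: "a \<in> J"
  shows "(\<Prod>i\<in>J. colrep M a c i (p i)) = c (inv p a) * (\<Prod>i\<in>J - {inv p a}. M i (p i))"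
proof -
  have i0: "inv p a \<in> J" using a permutes_in_image[OF permutes_inv[OF p]] by simp
  have "(\<Prod>i\<in>J. colrep M a c i (p i)) = colrep M a c (inv p a) (p (inv p a)) * (\<Prod>i\<in>J - {inv p a}. colrep M a c i (p i))"
    by (rule prod.remove[OF fin i0])
  also have "(\<Prod>i\<in>J - {inv p a}. colrep M a c i (p i)) = (\<Prod>i\<in>J - {inv p a}. M i (p i))"
  proof (rule prod.cong[OF refl])
    fix i assume "i \<in> J - {inv p a}"
    then have "p i \<noteq> a" using permutes_inverses[OF p] by auto
    then show "colrep M a c i (p i) = M i (p i)" by (simp add: colrep_def)
  qed
  finally show ?thesis by (simp add: colrep_def permutes_inverses[OF p])
qed

lemma det_lin_col:
  assumes fin: "finite J" and a: "a \<in> J"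
  shows "det_on J (colrep M a (\<lambda>i. \<Sum>k\<in>K. c k * v k i)) = (\<Sum>k\<in>K. c k * det_on J (colrep M a (v k)))"
proof -
  have "det_on J (colrep M a (\<lambda>i. \<Sum>k\<in>K. c k * v k i))
      = (\<Sum>p | p permutes J. \<Sum>k\<in>K. c k * (of_int (sign p) * (v k (inv p a) * (\<Prod>i\<in>J - {inv p a}. M i (p i)))))"
    unfolding det_on_def
  proof (rule sum.cong[OF refl])
    fix p assume "p \<in> {p. p permutes J}"
    then have p: "p permutes J" by simp
    let ?Q = "\<Prod>i\<in>J - {inv p a}. M i (p i)"
    have "of_int (sign p) * (\<Prod>i\<in>J. colrep M a (\<lambda>i. \<Sum>k\<in>K. c k * v k i) i (p i))
        = of_int (sign p) * ((\<Sum>k\<in>K. c k * v k (inv p a)) * ?Q)"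
      by (simp add: prod_col[OF fin p a])
    also have "\<dots> = (\<Sum>k\<in>K. of_int (sign p) * ((c k * v k (inv p a)) * ?Q))"
      by (simp only: sum_distrib_left sum_distrib_right)
    also have "\<dots> = (\<Sum>k\<in>K. c k * (of_int (sign p) * (v k (inv p a) * ?Q)))"
      by (rule sum.cong[OF refl]) (simp add: mult_ac)
    finally show "of_int (sign p) * (\<Prod>i\<in>J. colrep M a (\<lambda>i. \<Sum>k\<in>K. c k * v k i) i (p i))
        = (\<Sum>k\<in>K. c k * (of_int (sign p) * (v k (inv p a) * ?Q)))" .
  qed
  also have "\<dots> = (\<Sum>k\<in>K. c k * (\<Sum>p | p permutes J. of_int (sign p) * (v k (inv p a) * (\<Prod>i\<in>J - {inv p a}. M i (p i)))))"
    by (subst sum.swap) (simp add: sum_distrib_left)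
  also have "\<dots> = (\<Sum>k\<in>K. c k * det_on J (colrep M a (v k)))"
    unfolding det_on_def
    by (rule sum.cong[OF refl], rule arg_cong[where f="\<lambda>x. _ * x"], rule sum.cong[OF refl])
       (simp add: prod_col[OF fin _ a])
  finally show ?thesis .
qed

lemma det_unit_col:
  assumes fin: "finite J'" and aJ: "a \<notin> J'"
  shows "det_on (insert a J') (colrep M a (\<lambda>i. if i = a then 1 else 0)) = det_on J' M"
proof -
  let ?N = "colrep M a (\<lambda>i. if i = a then 1 else 0)"
  let ?f = "\<lambda>p. of_int (sign p) * (\<Prod>i\<in>insert a J'. ?N i (p i))"
  have "det_on (insert a J') ?N = (\<Sum>b\<in>insert a J'. \<Sum>q | q permutes J'. ?f (Transposition.transpose a b \<circ> q))"
    unfolding det_on_def by (rule sum_over_permutations_insert[OF fin aJ])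
  also have "\<dots> = (\<Sum>q | q permutes J'. ?f (Transposition.transpose a a \<circ> q))
       + (\<Sum>b\<in>J'. \<Sum>q | q permutes J'. ?f (Transposition.transpose a b \<circ> q))"
    using fin aJ by simp
  also have "(\<Sum>b\<in>J'. \<Sum>q | q permutes J'. ?f (Transposition.transpose a b \<circ> q)) = 0"
  proof (intro sum.neutral ballI)
    fix b q assume b: "b \<in> J'" and q: "q \<in> {q. q permutes J'}"
    then have q: "q permutes J'" by simp
    define i0 where "i0 = inv q b"
    have i0J: "i0 \<in> J'" using b permutes_in_image[OF permutes_inv[OF q]] by (simp add: i0_def)
    have qi0: "q i0 = b" using permutes_inverses[OF q] by (simp add: i0_def)
    have "i0 \<noteq> a" using i0J aJ by auto
    then have "?N i0 ((Transposition.transpose a b \<circ> q) i0) = 0"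
      using qi0 by (simp add: colrep_def)
    then have "(\<Prod>i\<in>insert a J'. ?N i ((Transposition.transpose a b \<circ> q) i)) = 0"
      using fin i0J by (intro prod_zero) auto
    then show "?f (Transposition.transpose a b \<circ> q) = 0" by simp
  qed
  also have "(\<Sum>q | q permutes J'. ?f (Transposition.transpose a a \<circ> q)) = det_on J' M"
    unfolding det_on_def
  proof (rule sum.cong[OF refl])
    fix q assume "q \<in> {q. q permutes J'}"
    then have q: "q permutes J'" by simp
    have qa: "q a = a" using permutes_not_in[OF q aJ] .
    have "(\<Prod>i\<in>insert a J'. ?N i (q i)) = ?N a (q a) * (\<Prod>i\<in>J'. ?N i (q i))"
      using fin aJ by simp
    also have "(\<Prod>i\<in>J'. ?N i (q i)) = (\<Prod>i\<in>J'. M i (q i))"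
    proof (rule prod.cong[OF refl])
      fix i assume "i \<in> J'"
      then have "q i \<in> J'" using permutes_in_image[OF q] by simp
      then show "?N i (q i) = M i (q i)" using aJ by (auto simp: colrep_def)
    qed
    finally show "?f (Transposition.transpose a a \<circ> q) = of_int (sign q) * (\<Prod>i\<in>J'. M i (q i))"
      using qa by (simp add: colrep_def)
  qed
  finally show ?thesis by simp
qed

lemma colrep_self: "colrep M a (\<lambda>i. M i a) = M"
  by (auto simp: colrep_def fun_eq_iff)

lemma inv_right:
  assumes "finite J" "pd_on J R" "i \<in> J" "j \<in> J"
  shows "(\<Sum>k\<in>J. R i k * inv_on J R k j) = (if i = j then 1 else 0)"
  using inv_on_is_inv[OF assms(1,2)] assms(3,4) by (simp add: is_inv_def)

lemma inv_out:
  assumes "finite J" "pd_on J R" "i \<notin> J \<or> j \<notin> J"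
  shows "inv_on J R i j = 0"
  using inv_on_is_inv[OF assms(1,2)] assms(3) by (simp add: is_inv_def)

lemma cramer:
  assumes fin: "finite J" and pd: "pd_on J R" and a: "a \<in> J"
  shows "det_on J R * inv_on J R a a = det_on (J - {a}) R"
proof -
  let ?P = "inv_on J R"
  have J: "J = insert a (J - {a})" using a by auto
  have "det_on (J - {a}) R = det_on J (colrep R a (\<lambda>i. if i = a then 1 else 0))"
    using det_unit_col[of "J - {a}" a R] fin J by simp
  also have "\<dots> = det_on J (colrep R a (\<lambda>i. \<Sum>k\<in>J. ?P k a * R i k))"
    by (rule det_cong) (auto simp: colrep_def inv_right[OF fin pd _ a] mult.commute)
  also have "\<dots> = (\<Sum>k\<in>J. ?P k a * det_on J (colrep R a (\<lambda>i. R i k)))"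
    by (rule det_lin_col[OF fin a])
  also have "\<dots> = ?P a a * det_on J (colrep R a (\<lambda>i. R i a))"
  proof (rule sum.remove[OF fin a, THEN trans], simp, rule sum.neutral, rule ballI)
    fix k assume "k \<in> J - {a}"
    then have "det_on J (colrep R a (\<lambda>i. R i k)) = 0"
      by (intro det_equal_cols[OF fin a, of k]) (auto simp: colrep_def)
    then show "?P k a * det_on J (colrep R a (\<lambda>i. R i k)) = 0" by simp
  qed
  finally show ?thesis by (simp add: colrep_self)
qed

lemma inv_sym:
  assumes fin: "finite J" and pd: "pd_on J R"
  shows "inv_on J R i j = inv_on J R j i"
proof (cases "i \<in> J \<and> j \<in> J")
  case False then show ?thesis using inv_out[OF fin pd] by auto
next
  case True
  let ?P = "inv_on J R"
  have L: "(\<Sum>m\<in>J. ?P m i * R m k) = (if k = i then 1 else 0)" if k: "k \<in> J" for k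
  proof -
    have "(\<Sum>m\<in>J. ?P m i * R m k) = (\<Sum>m\<in>J. R k m * ?P m i)"
      by (rule sum.cong[OF refl]) (use pd_sym[OF pd] k in \<open>auto simp: mult.commute\<close>)
    then show ?thesis using inv_right[OF fin pd k, of i] True by simp
  qed
  have "(\<Sum>k\<in>J. (\<Sum>m\<in>J. ?P m i * R m k) * ?P k j) = (\<Sum>k\<in>J. \<Sum>m\<in>J. ?P m i * (R m k * ?P k j))"
    by (simp only: sum_distrib_right mult.assoc)
  also have "\<dots> = (\<Sum>m\<in>J. \<Sum>k\<in>J. ?P m i * (R m k * ?P k j))"
    by (rule sum.swap)
  also have "\<dots> = (\<Sum>m\<in>J. ?P m i * (\<Sum>k\<in>J. R m k * ?P k j))"
    by (simp only: sum_distrib_left)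
  finally have "(\<Sum>k\<in>J. (\<Sum>m\<in>J. ?P m i * R m k) * ?P k j) = (\<Sum>m\<in>J. ?P m i * (\<Sum>k\<in>J. R m k * ?P k j))" .
  moreover have "(\<Sum>k\<in>J. (\<Sum>m\<in>J. ?P m i * R m k) * ?P k j) = ?P i j"
    using L True fin by (simp add: if_distrib[of "\<lambda>x. x * _"] cong: sum.cong if_cong)
  moreover have "(\<Sum>m\<in>J. ?P m i * (\<Sum>k\<in>J. R m k * ?P k j)) = ?P j i"
    using inv_right[OF fin pd _ , of _ j] True fin by (simp add: if_distrib[of "\<lambda>x. _ * x"] cong: sum.cong if_cong)
  ultimately show ?thesis by simp
qed

lemma inv_diag_pos:
  assumes fin: "finite J" and pd: "pd_on J R" and a: "a \<in> J"
  shows "inv_on J R a a > 0"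
proof -
  let ?P = "inv_on J R"
  define x where "x = (\<lambda>m. ?P m a)"
  have "(\<Sum>i\<in>J. \<Sum>j\<in>J. x i * R i j * x j) = (\<Sum>i\<in>J. x i * (if i = a then 1 else 0))"
    unfolding quad_eq x_def by (rule sum.cong[OF refl]) (simp add: inv_right[OF fin pd _ a])
  also have "\<dots> = ?P a a" using fin a by (simp add: x_def if_distrib[of "\<lambda>x. _ * x"] cong: if_cong)
  finally have eq: "(\<Sum>i\<in>J. \<Sum>j\<in>J. x i * R i j * x j) = ?P a a" .
  have "\<exists>i\<in>J. x i \<noteq> 0"
  proof (rule ccontr)
    assume "\<not> ?thesis"
    then have "(\<Sum>k\<in>J. R a k * ?P k a) = 0" by (simp add: x_def)
    then show False using inv_right[OF fin pd a a] by simp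
  qed
  then show ?thesis using pd eq unfolding pd_on_def by auto
qed

lemma det_pos:
  assumes fin: "finite J" and pd: "pd_on J R"
  shows "det_on J R > 0"
  using fin pd
proof (induction J rule: finite_induct)
  case empty
  show ?case by (simp add: det_on_def)
next
  case (insert a J')
  have pd': "pd_on J' R" using pd_subset[OF _ insert.prems] insert.hyps by auto
  have e: "det_on (insert a J') R * inv_on (insert a J') R a a = det_on J' R"
    using cramer[OF _ insert.prems, of a] insert.hyps by simp
  have "det_on J' R > 0" using insert.IH[OF pd'] .
  with e have m: "0 < det_on (insert a J') R * inv_on (insert a J') R a a" by simp
  have "inv_on (insert a J') R a a > 0" using inv_diag_pos[OF _ insert.prems, of a] insert.hyps by simp
  with m show ?case by (simp add: zero_less_mult_iff)
qed


lemma schur_inv: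
  assumes fin: "finite J" and pd: "pd_on J R" and a: "a \<in> J"
  shows "inv_on (J - {a}) R = (\<lambda>i j. if i \<in> J - {a} \<and> j \<in> J - {a}
            then inv_on J R i j - inv_on J R i a * inv_on J R a j / inv_on J R a a else 0)"
proof (rule inv_on_eq)
  show "finite (J - {a})" using fin by simp
  show pd': "pd_on (J - {a}) R" using pd_subset[OF fin pd] by auto
  let ?P = "inv_on J R"
  let ?p = "?P a a"
  have p: "?p > 0" by (rule inv_diag_pos[OF fin pd a])
  show "is_inv (J - {a}) R (\<lambda>i j. if i \<in> J - {a} \<and> j \<in> J - {a} then ?P i j - ?P i a * ?P a j / ?p else 0)"
    unfolding is_inv_def
  proof (intro conjI allI impI ballI)
    fix i j assume i: "i \<in> J - {a}" and j: "j \<in> J - {a}"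
    have s1: "(\<Sum>k\<in>J - {a}. R i k * ?P k j) = (if i = j then 1 else 0) - R i a * ?P a j"
      using sum.remove[OF fin a, of "\<lambda>k. R i k * ?P k j"] inv_right[OF fin pd, of i j] i j by simp
    have s2: "(\<Sum>k\<in>J - {a}. R i k * ?P k a) = - R i a * ?p"
      using sum.remove[OF fin a, of "\<lambda>k. R i k * ?P k a"] inv_right[OF fin pd, of i a] i a by simp
    have "(\<Sum>k\<in>J - {a}. R i k * (if k \<in> J - {a} \<and> j \<in> J - {a} then ?P k j - ?P k a * ?P a j / ?p else 0))
        = (\<Sum>k\<in>J - {a}. R i k * ?P k j - (R i k * ?P k a) * (?P a j / ?p))"
      using j by (intro sum.cong) (auto simp: algebra_simps)
    also have "\<dots> = (\<Sum>k\<in>J - {a}. R i k * ?P k j) - (\<Sum>k\<in>J - {a}. R i k * ?P k a) * (?P a j / ?p)"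
      by (simp only: sum_subtractf sum_distrib_right)
    also have "\<dots> = (if i = j then 1 else 0)"
      unfolding s1 s2 using p by simp
    finally show "(\<Sum>k\<in>J - {a}. R i k * (if k \<in> J - {a} \<and> j \<in> J - {a} then ?P k j - ?P k a * ?P a j / ?p else 0))
        = (if i = j then 1 else 0)" .
  qed auto
qed

lemma quad_split:
  fixes z :: "'i \<Rightarrow> real"
  assumes fin: "finite J" and a: "a \<in> J" and sym: "\<And>i j. P i j = P j i"
  shows "(\<Sum>i\<in>J. \<Sum>j\<in>J. z i * (P i j - (if i = j then 1 else 0)) * z j)
       = (P a a - 1) * (z a)\<^sup>2 + 2 * (\<Sum>j\<in>J - {a}. P a j * z j) * z a
         + (\<Sum>i\<in>J - {a}. \<Sum>j\<in>J - {a}. z i * (P i j - (if i = j then 1 else 0)) * z j)"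
proof -
  let ?J' = "J - {a}"
  let ?g = "\<lambda>i j. z i * (P i j - (if i = j then 1 else 0)) * z j"
  have r1: "(\<Sum>j\<in>J. ?g i j) = ?g i a + (\<Sum>j\<in>?J'. ?g i j)" for i
    by (rule sum.remove[OF fin a])
  have "(\<Sum>i\<in>J. \<Sum>j\<in>J. ?g i j) = (\<Sum>j\<in>J. ?g a j) + (\<Sum>i\<in>?J'. \<Sum>j\<in>J. ?g i j)"
    by (rule sum.remove[OF fin a])
  also have "\<dots> = (?g a a + (\<Sum>j\<in>?J'. ?g a j)) + ((\<Sum>i\<in>?J'. ?g i a) + (\<Sum>i\<in>?J'. \<Sum>j\<in>?J'. ?g i j))"
    unfolding r1 by (simp add: sum.distrib)
  also have "(\<Sum>j\<in>?J'. ?g a j) = (\<Sum>j\<in>?J'. P a j * z j) * z a"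
    by (simp add: sum_distrib_right) (rule sum.cong, auto)
  also have "(\<Sum>i\<in>?J'. ?g i a) = (\<Sum>j\<in>?J'. P a j * z j) * z a"
    by (simp add: sum_distrib_right) (rule sum.cong, auto simp: sym)
  finally show ?thesis by (simp add: power2_eq_square algebra_simps)
qed

lemma quad_schur:
  fixes z :: "'i \<Rightarrow> real"
  assumes sym: "\<And>i j. P i j = P j i"
  shows "(\<Sum>i\<in>J'. \<Sum>j\<in>J'. z i * ((if i \<in> J' \<and> j \<in> J' then P i j - P i a * P a j / p else 0) - (if i = j then 1 else 0)) * z j)
       = (\<Sum>i\<in>J'. \<Sum>j\<in>J'. z i * (P i j - (if i = j then 1 else 0)) * z j) - (\<Sum>j\<in>J'. P a j * z j)\<^sup>2 / p"
proof -
  have "(\<Sum>i\<in>J'. \<Sum>j\<in>J'. z i * ((if i \<in> J' \<and> j \<in> J' then P i j - P i a * P a j / p else 0) - (if i = j then 1 else 0)) * z j)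
      = (\<Sum>i\<in>J'. \<Sum>j\<in>J'. z i * (P i j - (if i = j then 1 else 0)) * z j - (P a i * z i) * (P a j * z j) / p)"
    by (intro sum.cong refl) (auto simp: algebra_simps sym)
  also have "\<dots> = (\<Sum>i\<in>J'. \<Sum>j\<in>J'. z i * (P i j - (if i = j then 1 else 0)) * z j) - (\<Sum>i\<in>J'. \<Sum>j\<in>J'. (P a i * z i) * (P a j * z j) / p)"
    by (simp only: sum_subtractf)
  also have "(\<Sum>i\<in>J'. \<Sum>j\<in>J'. (P a i * z i) * (P a j * z j) / p) = (\<Sum>j\<in>J'. P a j * z j)\<^sup>2 / p"
    by (simp add: power2_eq_square sum_product sum_divide_distrib)
  finally show ?thesis .
qed


definition leafG :: "'i set \<Rightarrow> ('i \<Rightarrow> real \<Rightarrow> real) \<Rightarrow> ('i \<Rightarrow> real \<Rightarrow> real) \<Rightarrow> ('i \<Rightarrow> 'i \<Rightarrow> real) \<Rightarrow> ('i \<Rightarrow> real) \<Rightarrow> real" where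
  "leafG J Fi fi R y = (\<Prod>i\<in>J. fi i (y i)) / sqrt (det_on J R)
     * exp (- (1/2) * (\<Sum>i\<in>J. \<Sum>j\<in>J. Phi_inv (Fi i (y i)) * (inv_on J R i j - (if i = j then 1 else 0)) * Phi_inv (Fi j (y j))))"

lemma copula_leaf_eq: "copula_leaf J Fi fi R y = leafG J Fi fi R y"
  by (simp add: copula_leaf_def leafG_def det_on_def Let_def)

lemma leaf_int:
  assumes fin: "finite J" and pd: "pd_on J R" and a: "a \<in> J"
    and cl: "cdf_like (Fi a) (fi a)" and nn: "\<And>i x. i \<in> J \<Longrightarrow> 0 \<le> fi i x"
  shows "(\<integral>\<^sup>+ t. ennreal (leafG J Fi fi R (y(a := t))) \<partial>lborel) = ennreal (leafG (J - {a}) Fi fi R y)"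
proof -
  let ?J' = "J - {a}"
  let ?P = "inv_on J R"
  let ?p = "?P a a"
  define z where "z = (\<lambda>i. Phi_inv (Fi i (y i)))"
  define u where "u = (\<lambda>t. Phi_inv (Fi a t))"
  define b where "b = (\<Sum>j\<in>?J'. ?P a j * z j)"
  define Q0 where "Q0 = (\<Sum>i\<in>?J'. \<Sum>j\<in>?J'. z i * (?P i j - (if i = j then 1 else 0)) * z j)"
  define Fp where "Fp = (\<Prod>i\<in>?J'. fi i (y i))"
  define D where "D = det_on J R"
  define C0 where "C0 = Fp / sqrt D * exp (- Q0 / 2)"
  have p: "?p > 0" by (rule inv_diag_pos[OF fin pd a])
  have D: "D > 0" unfolding D_def by (rule det_pos[OF fin pd])
  have Fp: "Fp \<ge> 0" unfolding Fp_def using nn by (intro prod_nonneg) auto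
  have C0: "C0 \<ge> 0" unfolding C0_def using Fp D by simp
  have sym: "\<And>i j. ?P i j = ?P j i" by (rule inv_sym[OF fin pd])
  have pt: "leafG J Fi fi R (y(a := t)) = C0 * (fi a t * exp (-((?p-1)*(u t)\<^sup>2 + 2*b*u t)/2))" for t
  proof -
    let ?w = "z(a := u t)"
    have zt: "\<And>i. Phi_inv (Fi i ((y(a := t)) i)) = ?w i" by (auto simp: z_def u_def)
    have prodeq: "(\<Prod>i\<in>J. fi i ((y(a := t)) i)) = fi a t * Fp"
    proof -
      have "(\<Prod>i\<in>J. fi i ((y(a := t)) i)) = fi a ((y(a := t)) a) * (\<Prod>i\<in>?J'. fi i ((y(a := t)) i))"
        by (rule prod.remove[OF fin a])
      also have "(\<Prod>i\<in>?J'. fi i ((y(a := t)) i)) = Fp" unfolding Fp_def by (rule prod.cong) auto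
      finally show ?thesis by simp
    qed
    have e1: "(\<Sum>j\<in>?J'. ?P a j * ?w j) = b" unfolding b_def by (rule sum.cong) auto
    have e2: "(\<Sum>i\<in>?J'. \<Sum>j\<in>?J'. ?w i * (?P i j - (if i = j then 1 else 0)) * ?w j) = Q0"
      unfolding Q0_def by (intro sum.cong refl) auto
    have q0: "(\<Sum>i\<in>J. \<Sum>j\<in>J. ?w i * (?P i j - (if i = j then 1 else 0)) * ?w j)
        = (?p - 1) * (u t)\<^sup>2 + 2 * b * u t + Q0"
      using quad_split[where P="?P" and z="?w", OF fin a sym] unfolding e1 e2 by simp
    have q: "(\<Sum>i\<in>J. \<Sum>j\<in>J. Phi_inv (Fi i ((y(a := t)) i)) * (?P i j - (if i = j then 1 else 0)) * Phi_inv (Fi j ((y(a := t)) j)))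
        = (?p - 1) * (u t)\<^sup>2 + 2 * b * u t + Q0"
      unfolding zt by (rule q0)
    have "leafG J Fi fi R (y(a := t)) = fi a t * Fp / sqrt D * exp (- (1/2) * ((?p - 1) * (u t)\<^sup>2 + 2 * b * u t + Q0))"
      unfolding leafG_def prodeq q D_def ..
    also have "exp (- (1/2) * ((?p - 1) * (u t)\<^sup>2 + 2 * b * u t + Q0)) = exp (- Q0 / 2) * exp (-((?p-1)*(u t)\<^sup>2 + 2*b*u t)/2)"
      by (simp add: exp_add[symmetric] field_simps)
    also have "fi a t * Fp / sqrt D * (exp (- Q0 / 2) * exp (-((?p-1)*(u t)\<^sup>2 + 2*b*u t)/2))
        = C0 * (fi a t * exp (-((?p-1)*(u t)\<^sup>2 + 2*b*u t)/2))"
      by (simp add: C0_def)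
    finally show ?thesis .
  qed
  have meas: "(\<lambda>t. ennreal (fi a t * exp (-((?p-1)*(u t)\<^sup>2 + 2*b*u t)/2))) \<in> borel_measurable lborel"
    using f_meas[OF cl] zq_meas[OF cl] unfolding u_def by measurable
  have "(\<integral>\<^sup>+ t. ennreal (leafG J Fi fi R (y(a := t))) \<partial>lborel)
      = (\<integral>\<^sup>+ t. ennreal C0 * ennreal (fi a t * exp (-((?p-1)*(u t)\<^sup>2 + 2*b*u t)/2)) \<partial>lborel)"
    unfolding pt using C0 cl_f_nonneg[OF cl] by (intro nn_integral_cong) (simp add: ennreal_mult)
  also have "\<dots> = ennreal C0 * (\<integral>\<^sup>+ t. ennreal (fi a t * exp (-((?p-1)*(u t)\<^sup>2 + 2*b*u t)/2)) \<partial>lborel)"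
    by (rule nn_integral_cmult[OF meas])
  also have "\<dots> = ennreal C0 * ennreal (exp (b\<^sup>2/(2*?p)) / sqrt ?p)"
    unfolding u_def by (subst gauss_step[OF cl p]) simp
  also have "\<dots> = ennreal (C0 * (exp (b\<^sup>2/(2*?p)) / sqrt ?p))"
    using C0 p by (subst ennreal_mult[symmetric]) auto
  also have "C0 * (exp (b\<^sup>2/(2*?p)) / sqrt ?p) = leafG ?J' Fi fi R y"
  proof -
    have dJ': "det_on ?J' R = D * ?p" using cramer[OF fin pd a] by (simp add: D_def)
    have qJ': "(\<Sum>i\<in>?J'. \<Sum>j\<in>?J'. z i * (inv_on ?J' R i j - (if i = j then 1 else 0)) * z j) = Q0 - b\<^sup>2 / ?p"
      unfolding schur_inv[OF fin pd a] quad_schur[of ?P z ?J' a ?p, OF sym] Q0_def b_def ..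
    have "leafG ?J' Fi fi R y = Fp / sqrt (D * ?p) * exp (- (1/2) * (Q0 - b\<^sup>2 / ?p))"
      unfolding leafG_def dJ' Fp_def using qJ' by (simp add: z_def)
    also have "\<dots> = Fp / sqrt D * exp (- Q0 / 2) * (exp (b\<^sup>2/(2*?p)) / sqrt ?p)"
      using p D by (simp add: real_sqrt_mult exp_add[symmetric] field_simps)
    finally show ?thesis by (simp add: C0_def)
  qed
  finally show ?thesis .
qed


lemma circ_cases:
  "circ K W L (Suc (Suc c)) k = (\<Sum>i\<in>{1..K}. \<Sum>j\<in>{1..K}. W (Suc (Suc c)) (i, j) k * circ K W L (Suc c) i * L (Suc (Suc c)) j)"
  by simp

lemma nat_cases3:
  obtains (c0) "c = 0" | (c1) "c = Suc 0" | (c2) m where "c = Suc (Suc m)"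
  by (metis nat.exhaust)

lemma circ_local:
  assumes "\<And>c' k. c' \<le> c \<Longrightarrow> L c' k = L' c' k"
  shows "circ K W L c k = circ K W L' c k"
  using assms
proof (induction c arbitrary: k rule: less_induct)
  case (less c)
  show ?case
  proof (cases c rule: nat_cases3)
    case (c2 m)
    then have c: "c = Suc (Suc m)" by simp
    have "circ K W L (Suc m) i = circ K W L' (Suc m) i" for i
      by (rule less.IH) (use c less.prems in auto)
    then show ?thesis using less.prems c by simp
  qed (use less.prems in auto)
qed

lemma circ_nonneg:
  assumes L: "\<And>c k. 0 \<le> L c k"
    and W: "\<And>c' i j k. c' \<in> {2..C} \<Longrightarrow> i \<in> {1..K} \<Longrightarrow> j \<in> {1..K} \<Longrightarrow> k \<in> {1..K} \<Longrightarrow> 0 \<le> W c' (i, j) k"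
    and "c \<le> C" "k \<in> {1..K}"
  shows "0 \<le> circ K W L c k"
  using assms(3,4)
proof (induction c arbitrary: k rule: less_induct)
  case (less c)
  show ?case
  proof (cases c rule: nat_cases3)
    case (c2 m)
    then have c: "c = Suc (Suc m)" by simp
    have IH: "0 \<le> circ K W L (Suc m) i" if "i \<in> {1..K}" for i
      by (rule less.IH) (use c less.prems that in auto)
    show ?thesis unfolding c circ_cases
      by (intro sum_nonneg mult_nonneg_nonneg IH L W) (use c less.prems in auto)
  qed (use L in auto)
qed

lemma circ_meas:
  assumes "\<And>c k. (\<lambda>x. L x c k) \<in> borel_measurable M"
  shows "(\<lambda>x. circ K W (L x) c k) \<in> borel_measurable M"
proof (induction c arbitrary: k rule: less_induct)
  case (less c)
  show ?case
  proof (cases c rule: nat_cases3)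
    case (c2 m)
    then have c: "c = Suc (Suc m)" by simp
    have IH: "(\<lambda>x. circ K W (L x) (Suc m) i) \<in> borel_measurable M" for i
      by (rule less.IH) (use c in auto)
    show ?thesis unfolding c circ_cases
      by (intro borel_measurable_sum borel_measurable_times borel_measurable_const IH assms)
  qed (use assms in auto)
qed

lemma nn_int_lincomb:
  fixes A :: "nat \<Rightarrow> nat \<Rightarrow> real" and g :: "real \<Rightarrow> nat \<Rightarrow> nat \<Rightarrow> real"
  assumes I: "finite I" and Jx: "finite Jx"
    and A: "\<And>i j. i \<in> I \<Longrightarrow> j \<in> Jx \<Longrightarrow> 0 \<le> A i j"
    and g: "\<And>t i j. i \<in> I \<Longrightarrow> j \<in> Jx \<Longrightarrow> 0 \<le> g t i j"
    and gm: "\<And>i j. i \<in> I \<Longrightarrow> j \<in> Jx \<Longrightarrow> (\<lambda>t. g t i j) \<in> borel_measurable borel"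
    and h: "\<And>i j. i \<in> I \<Longrightarrow> j \<in> Jx \<Longrightarrow> (\<integral>\<^sup>+ t. ennreal (g t i j) \<partial>lborel) = ennreal (h i j)"
    and hnn: "\<And>i j. i \<in> I \<Longrightarrow> j \<in> Jx \<Longrightarrow> 0 \<le> h i j"
  shows "(\<integral>\<^sup>+ t. ennreal (\<Sum>i\<in>I. \<Sum>j\<in>Jx. A i j * g t i j) \<partial>lborel) = ennreal (\<Sum>i\<in>I. \<Sum>j\<in>Jx. A i j * h i j)"
proof -
  have e1: "ennreal (\<Sum>i\<in>I. \<Sum>j\<in>Jx. A i j * g t i j) = (\<Sum>i\<in>I. \<Sum>j\<in>Jx. ennreal (A i j) * ennreal (g t i j))" for t
  proof -
    have "ennreal (\<Sum>i\<in>I. \<Sum>j\<in>Jx. A i j * g t i j) = (\<Sum>i\<in>I. ennreal (\<Sum>j\<in>Jx. A i j * g t i j))"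
      by (rule sum_ennreal[symmetric]) (use A g in \<open>auto intro!: sum_nonneg\<close>)
    also have "\<dots> = (\<Sum>i\<in>I. \<Sum>j\<in>Jx. ennreal (A i j * g t i j))"
      by (intro sum.cong refl sum_ennreal[symmetric]) (use A g in auto)
    also have "\<dots> = (\<Sum>i\<in>I. \<Sum>j\<in>Jx. ennreal (A i j) * ennreal (g t i j))"
      by (intro sum.cong refl ennreal_mult) (use A g in auto)
    finally show ?thesis .
  qed
  have "(\<integral>\<^sup>+ t. ennreal (\<Sum>i\<in>I. \<Sum>j\<in>Jx. A i j * g t i j) \<partial>lborel)
      = (\<integral>\<^sup>+ t. (\<Sum>i\<in>I. \<Sum>j\<in>Jx. ennreal (A i j) * ennreal (g t i j)) \<partial>lborel)"
    unfolding e1 ..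
  also have "\<dots> = (\<Sum>i\<in>I. (\<integral>\<^sup>+ t. (\<Sum>j\<in>Jx. ennreal (A i j) * ennreal (g t i j)) \<partial>lborel))"
    by (rule nn_integral_sum) (use gm in \<open>auto intro!: borel_measurable_sum\<close>)
  also have "\<dots> = (\<Sum>i\<in>I. \<Sum>j\<in>Jx. (\<integral>\<^sup>+ t. ennreal (A i j) * ennreal (g t i j) \<partial>lborel))"
    by (intro sum.cong refl nn_integral_sum) (use gm in auto)
  also have "\<dots> = (\<Sum>i\<in>I. \<Sum>j\<in>Jx. ennreal (A i j) * ennreal (h i j))"
    by (intro sum.cong refl) (use gm h in \<open>simp add: nn_integral_cmult\<close>)
  also have "\<dots> = ennreal (\<Sum>i\<in>I. \<Sum>j\<in>Jx. A i j * h i j)"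
  proof -
    have "(\<Sum>i\<in>I. \<Sum>j\<in>Jx. ennreal (A i j) * ennreal (h i j)) = (\<Sum>i\<in>I. \<Sum>j\<in>Jx. ennreal (A i j * h i j))"
      by (intro sum.cong refl ennreal_mult[symmetric]) (use A hnn in auto)
    also have "\<dots> = (\<Sum>i\<in>I. ennreal (\<Sum>j\<in>Jx. A i j * h i j))"
      by (intro sum.cong refl sum_ennreal) (use A hnn in auto)
    also have "\<dots> = ennreal (\<Sum>i\<in>I. \<Sum>j\<in>Jx. A i j * h i j)"
      by (rule sum_ennreal) (use A hnn in \<open>auto intro!: sum_nonneg\<close>)
    finally show ?thesis .
  qed
  finally show ?thesis .
qed

lemma circ_int:
  fixes Lt :: "real \<Rightarrow> nat \<Rightarrow> nat \<Rightarrow> real" and L' :: "nat \<Rightarrow> nat \<Rightarrow> real"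
  assumes cz: "1 \<le> cz"
    and nnLt: "\<And>t c k. 0 \<le> Lt t c k" and nnL': "\<And>c k. 0 \<le> L' c k"
    and other: "\<And>t c k. c \<noteq> cz \<Longrightarrow> Lt t c k = L' c k"
    and int: "\<And>k. k \<in> {1..K} \<Longrightarrow> (\<integral>\<^sup>+ t. ennreal (Lt t cz k) \<partial>lborel) = ennreal (L' cz k)"
    and meas: "\<And>c k. (\<lambda>t. Lt t c k) \<in> borel_measurable borel"
    and W: "\<And>c' i j k. c' \<in> {2..C} \<Longrightarrow> i \<in> {1..K} \<Longrightarrow> j \<in> {1..K} \<Longrightarrow> k \<in> {1..K} \<Longrightarrow> 0 \<le> W c' (i, j) k"
    and "cz \<le> c" "c \<le> C" "k \<in> {1..K}"
  shows "(\<integral>\<^sup>+ t. ennreal (circ K W (Lt t) c k) \<partial>lborel) = ennreal (circ K W L' c k)"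
  using assms(8-10)
proof (induction c arbitrary: k rule: less_induct)
  case (less c)
  show ?case
  proof (cases c rule: nat_cases3)
    case c0
    then show ?thesis using less.prems assms(1) by simp
  next
    case c1
    then have "cz = 1" using less.prems assms(1) by simp
    then show ?thesis using c1 int less.prems by simp
  next
    case (c2 m)
    have cC: "c \<in> {2..C}" using c2 less.prems by simp
    show ?thesis
    proof (cases "c = cz")
      case True
      have loc: "circ K W (Lt t) (Suc m) i = circ K W L' (Suc m) i" for t i
        by (rule circ_local) (use other True c2 in auto)
      have "(\<integral>\<^sup>+ t. ennreal (circ K W (Lt t) c k) \<partial>lborel)
          = (\<integral>\<^sup>+ t. ennreal (\<Sum>i\<in>{1..K}. \<Sum>j\<in>{1..K}. (W c (i, j) k * circ K W L' (Suc m) i) * Lt t c j) \<partial>lborel)"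
        unfolding c2 circ_cases loc ..
      also have "\<dots> = ennreal (\<Sum>i\<in>{1..K}. \<Sum>j\<in>{1..K}. (W c (i, j) k * circ K W L' (Suc m) i) * L' c j)"
      proof (rule nn_int_lincomb)
        fix i j assume i: "i \<in> {1..K}" and j: "j \<in> {1..K}"
        show "0 \<le> W c (i, j) k * circ K W L' (Suc m) i"
          using W[OF cC i j less.prems(3)] circ_nonneg[of L' C K W "Suc m" i, OF nnL' W] c2 less.prems i by simp
        show "(\<integral>\<^sup>+ t. ennreal (Lt t c j) \<partial>lborel) = ennreal (L' c j)" using int j True by simp
      qed (use nnLt meas nnL' in auto)
      also have "\<dots> = ennreal (circ K W L' c k)" unfolding c2 circ_cases ..
      finally show ?thesis .
    next
      case False
      have ge: "cz \<le> Suc m" using False less.prems c2 by simp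
      have IH: "(\<integral>\<^sup>+ t. ennreal (circ K W (Lt t) (Suc m) i) \<partial>lborel) = ennreal (circ K W L' (Suc m) i)"
        if "i \<in> {1..K}" for i
        by (rule less.IH) (use c2 less.prems ge that in auto)
      have "(\<integral>\<^sup>+ t. ennreal (circ K W (Lt t) c k) \<partial>lborel)
          = (\<integral>\<^sup>+ t. ennreal (\<Sum>i\<in>{1..K}. \<Sum>j\<in>{1..K}. (W c (i, j) k * L' c j) * circ K W (Lt t) (Suc m) i) \<partial>lborel)"
        unfolding c2 circ_cases using other[where c="Suc (Suc m)"] False c2
        by (simp add: mult_ac)
      also have "\<dots> = ennreal (\<Sum>i\<in>{1..K}. \<Sum>j\<in>{1..K}. (W c (i, j) k * L' c j) * circ K W L' (Suc m) i)"
      proof (rule nn_int_lincomb)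
        fix i j assume i: "i \<in> {1..K}" and j: "j \<in> {1..K}"
        show "0 \<le> W c (i, j) k * L' c j"
          using W[OF cC i j less.prems(3)] nnL' by simp
        show "0 \<le> circ K W (Lt t) (Suc m) i" for t
          using circ_nonneg[of "Lt t" C K W "Suc m" i, OF nnLt W] c2 less.prems i by simp
        show "(\<lambda>t. circ K W (Lt t) (Suc m) i) \<in> borel_measurable borel"
          by (rule circ_meas[OF meas])
        show "0 \<le> circ K W L' (Suc m) i"
          using circ_nonneg[of L' C K W "Suc m" i, OF nnL' W] c2 less.prems i by simp
      qed (use IH in auto)
      also have "\<dots> = ennreal (circ K W L' c k)" unfolding c2 circ_cases by (simp add: mult_ac)
      finally show ?thesis .
    qed
  qed
qed


lemma vnorm_lt:
  fixes w :: "real^'h"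
  shows "inner (\<chi> l. tanh (w $ l)) (\<chi> l. tanh (w $ l)) < real CARD('h)"
proof -
  have "inner (\<chi> l. tanh (w $ l)) (\<chi> l. tanh (w $ l)) = (\<Sum>l\<in>UNIV. (tanh (w $ l))\<^sup>2)"
    by (simp add: inner_vec_def power2_eq_square)
  also have "\<dots> < (\<Sum>l\<in>(UNIV::'h set). 1)"
  proof (rule sum_strict_mono)
    fix l :: 'h
    have "\<bar>tanh (w $ l)\<bar> < 1" using tanh_real_bounds[of "w $ l"] by auto
    then show "(tanh (w $ l))\<^sup>2 < 1" by (simp add: abs_square_less_1)
  qed auto
  finally show ?thesis by simp
qed

lemma corrR_pd:
  fixes g :: "'e \<Rightarrow> real^'h" and e :: "'q \<Rightarrow> 'e"
  assumes fin: "finite J"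
  shows "pd_on J (corrR g e)"
  unfolding pd_on_def
proof (intro conjI ballI allI impI)
  fix i j assume "i \<in> J" "j \<in> J"
  show "corrR g e i j = corrR g e j i" by (simp add: corrR_def inner_commute)
next
  fix x :: "'q \<Rightarrow> real" assume ex: "\<exists>i\<in>J. x i \<noteq> 0"
  define H where "H = real CARD('h)"
  have H: "H > 0" by (simp add: H_def)
  define v where "v = (\<lambda>i. (\<chi> l. tanh (g (e i) $ l)) :: real^'h)"
  have R: "corrR g e i j = inner (v i) (v j) / H + (if i = j then 1 - inner (v i) (v i) / H else 0)" for i j
    by (simp add: corrR_def v_def H_def)
  have "(\<Sum>i\<in>J. \<Sum>j\<in>J. x i * corrR g e i j * x j)
      = (\<Sum>i\<in>J. \<Sum>j\<in>J. x i * x j * inner (v i) (v j)) / H + (\<Sum>i\<in>J. (x i)\<^sup>2 * (1 - inner (v i) (v i) / H))"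
  proof -
    have "(\<Sum>i\<in>J. \<Sum>j\<in>J. x i * corrR g e i j * x j)
        = (\<Sum>i\<in>J. (\<Sum>j\<in>J. x i * x j * inner (v i) (v j) / H) + (\<Sum>j\<in>J. if i = j then x i * (1 - inner (v i) (v i) / H) * x j else 0))"
    proof (intro sum.cong refl)
      fix i
      have pt: "x i * corrR g e i j * x j = x i * x j * inner (v i) (v j) / H + (if i = j then x i * (1 - inner (v i) (v i) / H) * x j else 0)" for j
        unfolding R by (cases "i = j") (simp_all add: algebra_simps)
      then show "(\<Sum>j\<in>J. x i * corrR g e i j * x j) = (\<Sum>j\<in>J. x i * x j * inner (v i) (v j) / H) + (\<Sum>j\<in>J. if i = j then x i * (1 - inner (v i) (v i) / H) * x j else 0)"
        by (simp only: pt sum.distrib)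
    qed
    also have "\<dots> = (\<Sum>i\<in>J. (\<Sum>j\<in>J. x i * x j * inner (v i) (v j) / H) + (x i)\<^sup>2 * (1 - inner (v i) (v i) / H))"
      using fin by (intro sum.cong refl) (simp add: power2_eq_square mult_ac)
    also have "\<dots> = (\<Sum>i\<in>J. \<Sum>j\<in>J. x i * x j * inner (v i) (v j)) / H + (\<Sum>i\<in>J. (x i)\<^sup>2 * (1 - inner (v i) (v i) / H))"
      by (simp add: sum.distrib sum_divide_distrib)
    finally show ?thesis .
  qed
  moreover have "(\<Sum>i\<in>J. \<Sum>j\<in>J. x i * x j * inner (v i) (v j)) = inner (\<Sum>i\<in>J. x i *\<^sub>R v i) (\<Sum>j\<in>J. x j *\<^sub>R v j)"
  proof -
    have "inner (\<Sum>i\<in>J. x i *\<^sub>R v i) (\<Sum>j\<in>J. x j *\<^sub>R v j) = (\<Sum>j\<in>J. x j * (\<Sum>i\<in>J. x i * (v i \<bullet> v j)))"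
      by (simp only: inner_sum_left inner_sum_right inner_scaleR_left inner_scaleR_right mult.assoc)
    also have "\<dots> = (\<Sum>j\<in>J. \<Sum>i\<in>J. x j * (x i * (v i \<bullet> v j)))"
      by (simp only: sum_distrib_left)
    also have "\<dots> = (\<Sum>i\<in>J. \<Sum>j\<in>J. x j * (x i * (v i \<bullet> v j)))"
      by (rule sum.swap)
    also have "\<dots> = (\<Sum>i\<in>J. \<Sum>j\<in>J. x i * x j * inner (v i) (v j))"
      by (intro sum.cong refl) (simp add: mult_ac)
    finally show ?thesis by simp
  qed
  moreover have "0 < (\<Sum>i\<in>J. (x i)\<^sup>2 * (1 - inner (v i) (v i) / H))"
  proof -
    from ex obtain i0 where i0: "i0 \<in> J" "x i0 \<noteq> 0" by blast
    have pos: "0 < 1 - inner (v i) (v i) / H" for i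
      using vnorm_lt[of "g (e i)"] H by (simp add: v_def H_def field_simps)
    have a1: "0 < (x i0)\<^sup>2 * (1 - inner (v i0) (v i0) / H)" using i0 pos[of i0] by simp
    have a2: "0 \<le> (x i)\<^sup>2 * (1 - inner (v i) (v i) / H)" for i using pos[of i] by simp
    show ?thesis by (rule sum_pos2[where f="\<lambda>i. (x i)\<^sup>2 * (1 - inner (v i) (v i) / H)", OF fin i0(1) a1 a2])
  qed
  ultimately show "0 < (\<Sum>i\<in>J. \<Sum>j\<in>J. x i * corrR g e i j * x j)"
    using H by (simp add: add_nonneg_pos)
qed


lemma leafG_meas:
  assumes hm: "\<And>i. i \<in> J \<Longrightarrow> (\<lambda>x. h x i) \<in> borel_measurable M"
    and cl: "\<And>i. i \<in> J \<Longrightarrow> cdf_like (Fi i) (fi i)"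
  shows "(\<lambda>x. leafG J Fi fi R (h x)) \<in> borel_measurable M"
proof -
  have m1: "(\<lambda>x. fi i (h x i)) \<in> borel_measurable M" if "i \<in> J" for i
    using measurable_compose[OF hm[OF that] f_meas[OF cl[OF that]]] by simp
  have m2: "(\<lambda>x. Phi_inv (Fi i (h x i))) \<in> borel_measurable M" if "i \<in> J" for i
    using measurable_compose[OF hm[OF that] zq_meas[OF cl[OF that]]] by simp
  show ?thesis
    unfolding leafG_def
    by (intro borel_measurable_times borel_measurable_divide borel_measurable_prod borel_measurable_sum
        borel_measurable_const measurable_compose[OF _ borel_measurable_exp] m1 m2 borel_measurable_diff)
qed

lemma leafG_nonneg:
  assumes "finite J" "pd_on J R" "\<And>i x. i \<in> J \<Longrightarrow> 0 \<le> fi i x"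
  shows "0 \<le> leafG J Fi fi R y"
  unfolding leafG_def using det_pos[OF assms(1,2)] assms(3)
  by (intro mult_nonneg_nonneg divide_nonneg_pos prod_nonneg) auto

lemma leafG_cong:
  assumes "\<And>i. i \<in> J \<Longrightarrow> y i = y' i"
  shows "leafG J Fi fi R y = leafG J Fi fi R y'"
  unfolding leafG_def using assms by (simp cong: prod.cong sum.cong)


context
  fixes \<phi> :: "real \<Rightarrow> 'a" and Proj :: "'a \<times> 'b \<Rightarrow> nat \<Rightarrow> 'e"
    and htil :: "(real \<times> nat \<times> real) list \<Rightarrow> nat \<Rightarrow> 'b"
    and g :: "'e \<Rightarrow> real^'h" and thetaMap :: "'e \<Rightarrow> 't"
    and Fc fd :: "'t \<Rightarrow> real \<Rightarrow> real"
    and C K :: nat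
    and wroot :: "(real \<times> nat \<times> real) list \<Rightarrow> nat \<Rightarrow> real"
    and W :: "(real \<times> nat \<times> real) list \<Rightarrow> nat \<Rightarrow> nat \<times> nat \<Rightarrow> nat \<Rightarrow> real"
    and X :: "(real \<times> nat \<times> real) list"
    and qt :: "'q \<Rightarrow> real" and qc :: "'q \<Rightarrow> nat"
  assumes F_mono: "\<And>\<theta>. strict_mono (Fc \<theta>)"
    and F_deriv: "\<And>\<theta> x. (Fc \<theta> has_real_derivative fd \<theta> x) (at x)"
    and f_cont: "\<And>\<theta>. continuous_on UNIV (fd \<theta>)"
    and F_bot: "\<And>\<theta>. (Fc \<theta> \<longlongrightarrow> 0) at_bot"
    and F_top: "\<And>\<theta>. (Fc \<theta> \<longlongrightarrow> 1) at_top"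
    and wroot_nonneg: "\<And>Xs k. k \<in> {1..K} \<Longrightarrow> wroot Xs k \<ge> 0"
    and W_nonneg: "\<And>Xs c i j k. c \<in> {2..C} \<Longrightarrow> i \<in> {1..K} \<Longrightarrow> j \<in> {1..K} \<Longrightarrow> k \<in> {1..K}
                     \<Longrightarrow> W Xs c (i, j) k \<ge> 0"
begin

definition "ee k i = emb \<phi> Proj htil X k (qt i) (qc i)"
definition "LL I y c k = copula_leaf {i\<in>I. qc i = c} (\<lambda>i. Fc (thetaMap (ee k i))) (\<lambda>i. fd (thetaMap (ee k i))) (corrR g (ee k)) y"

lemma dens_eq: "circuits_density C K \<phi> Proj htil g thetaMap Fc fd wroot W X qt qc I y
   = (\<Sum>k\<in>{1..K}. wroot X k * circ K (W X) (LL I y) C k)"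
  unfolding circuits_density_def Let_def LL_def ee_def ..

lemma cl_all: "cdf_like (Fc \<theta>) (fd \<theta>)"
  unfolding cdf_like_def using F_mono F_deriv f_cont F_bot F_top by blast

lemma LL_eq: "LL I y c k = leafG {i\<in>I. qc i = c} (\<lambda>i. Fc (thetaMap (ee k i))) (\<lambda>i. fd (thetaMap (ee k i))) (corrR g (ee k)) y"
  unfolding LL_def copula_leaf_eq ..

lemma LL_nonneg: "finite I \<Longrightarrow> 0 \<le> LL I y c k"
  unfolding LL_eq by (rule leafG_nonneg) (auto intro: corrR_pd cl_f_nonneg[OF cl_all])

lemma LL_meas:
  assumes "finite I" "\<And>i. i \<in> I \<Longrightarrow> (\<lambda>x. h x i) \<in> borel_measurable M"
  shows "(\<lambda>x. LL I (h x) c k) \<in> borel_measurable M"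
  unfolding LL_eq by (rule leafG_meas) (use assms cl_all in auto)

lemma dens_nonneg:
  assumes "finite I"
  shows "0 \<le> (\<Sum>k\<in>{1..K}. wroot X k * circ K (W X) (LL I y) C k)"
  by (intro sum_nonneg mult_nonneg_nonneg wroot_nonneg circ_nonneg[where C=C] LL_nonneg[OF assms] W_nonneg) auto

lemma dens_meas:
  assumes "finite I" "\<And>i. i \<in> I \<Longrightarrow> (\<lambda>x. h x i) \<in> borel_measurable M"
  shows "(\<lambda>x. (\<Sum>k\<in>{1..K}. wroot X k * circ K (W X) (LL I (h x)) C k)) \<in> borel_measurable M"
  by (intro borel_measurable_sum borel_measurable_times borel_measurable_const circ_meas LL_meas[OF assms])


lemma dens_step:
  assumes fin: "finite I" and a: "a \<in> I" and ch: "qc a \<in> {1..C}"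
  shows "(\<integral>\<^sup>+ t. ennreal (\<Sum>k\<in>{1..K}. wroot X k * circ K (W X) (LL I (y(a := t))) C k) \<partial>lborel)
       = ennreal (\<Sum>k\<in>{1..K}. wroot X k * circ K (W X) (LL (I - {a}) y) C k)"
proof -
  let ?c0 = "qc a"
  have ci: "(\<integral>\<^sup>+ t. ennreal (circ K (W X) (LL I (y(a := t))) C k) \<partial>lborel) = ennreal (circ K (W X) (LL (I - {a}) y) C k)"
    if k: "k \<in> {1..K}" for k
  proof (rule circ_int[where cz = "qc a" and Lt = "\<lambda>t. LL I (y(a := t))"])
    show "1 \<le> ?c0" using ch by simp
    show "0 \<le> LL I (y(a := t)) c k" for t c k using LL_nonneg fin by simp
    show "0 \<le> LL (I - {a}) y c k" for c k using LL_nonneg fin by simp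
    show "LL I (y(a := t)) c k = LL (I - {a}) y c k" if "c \<noteq> ?c0" for t c k
    proof -
      have s: "{i\<in>I. qc i = c} = {i\<in>I - {a}. qc i = c}" using that by auto
      show ?thesis unfolding LL_eq s by (rule leafG_cong) auto
    qed
    show "(\<integral>\<^sup>+ t. ennreal (LL I (y(a := t)) ?c0 k) \<partial>lborel) = ennreal (LL (I - {a}) y ?c0 k)"
      if "k \<in> {1..K}" for k
    proof -
      have s: "{i\<in>I - {a}. qc i = ?c0} = {i\<in>I. qc i = ?c0} - {a}" by auto
      show ?thesis unfolding LL_eq s
        by (rule leaf_int) (use fin a in \<open>auto intro: corrR_pd cl_all cl_f_nonneg[OF cl_all]\<close>)
    qed
    show "(\<lambda>t. LL I (y(a := t)) c k) \<in> borel_measurable borel" for c k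
      by (rule LL_meas[OF fin]) simp
    show "\<And>c' i j k. c' \<in> {2..C} \<Longrightarrow> i \<in> {1..K} \<Longrightarrow> j \<in> {1..K} \<Longrightarrow> k \<in> {1..K} \<Longrightarrow> 0 \<le> W X c' (i, j) k"
      by (rule W_nonneg)
    show "?c0 \<le> C" using ch by simp
    show "C \<le> C" ..
    show "k \<in> {1..K}" by (rule k)
  qed
  have "(\<integral>\<^sup>+ t. ennreal (\<Sum>k\<in>{1..K}. \<Sum>j\<in>{0::nat}. wroot X k * circ K (W X) (LL I (y(a := t))) C k) \<partial>lborel)
       = ennreal (\<Sum>k\<in>{1..K}. \<Sum>j\<in>{0::nat}. wroot X k * circ K (W X) (LL (I - {a}) y) C k)"
  proof (rule nn_int_lincomb[where A="\<lambda>k j. wroot X k" and g="\<lambda>t k j. circ K (W X) (LL I (y(a := t))) C k"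
        and h="\<lambda>k j. circ K (W X) (LL (I - {a}) y) C k"])
    show "(\<lambda>t. circ K (W X) (LL I (y(a := t))) C k) \<in> borel_measurable borel" for k
      by (intro circ_meas LL_meas[OF fin]) simp
  qed (use ci wroot_nonneg fin in \<open>auto intro!: circ_nonneg[where C=C] LL_nonneg W_nonneg\<close>)
  then show ?thesis by simp
qed

lemma merge_meas:
  "(\<lambda>x. if i \<in> S then x i else y i) \<in> borel_measurable (PiM S (\<lambda>_. (lborel :: real measure)))"
proof (cases "i \<in> S")
  case True
  have "(\<lambda>x. x i) \<in> measurable (PiM S (\<lambda>_. (lborel :: real measure))) lborel"
    by (rule measurable_component_singleton[OF True])
  then show ?thesis using True by simp
qed simp

lemma dens_marg:
  assumes finA: "finite A"
  shows "finite I \<Longrightarrow> A \<subseteq> I \<Longrightarrow> (\<forall>i\<in>I. qc i \<in> {1..C}) \<Longrightarrow>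
    (\<integral>\<^sup>+ yA. ennreal (\<Sum>k\<in>{1..K}. wroot X k * circ K (W X) (LL I (\<lambda>i. if i \<in> A then yA i else y i)) C k)
       \<partial>(PiM A (\<lambda>_. lborel)))
    = ennreal (\<Sum>k\<in>{1..K}. wroot X k * circ K (W X) (LL (I - A) y) C k)"
  using finA
proof (induction A arbitrary: I rule: finite_induct)
  case empty
  show ?case by (simp add: PiM_empty nn_integral_count_space_finite dens_nonneg[OF empty.prems(1)])
next
  case (insert a A)
  interpret P: product_sigma_finite "\<lambda>_. (lborel :: real measure)"
    by (simp add: product_sigma_finite_def sigma_finite_lborel)
  let ?D = "\<lambda>I y. (\<Sum>k\<in>{1..K}. wroot X k * circ K (W X) (LL I y) C k)"
  have aI: "a \<in> I" and AI: "A \<subseteq> I - {a}" using insert.prems insert.hyps by auto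
  have meas: "(\<lambda>yA. ennreal (?D I (\<lambda>i. if i \<in> insert a A then yA i else y i))) \<in> borel_measurable (PiM (insert a A) (\<lambda>_. lborel))"
    by (intro measurable_compose[OF _ measurable_ennreal] dens_meas[OF insert.prems(1)] merge_meas)
  have fu: "(\<lambda>i. if i \<in> insert a A then (x(a := t)) i else y i) = (\<lambda>i. if i \<in> A then x i else y i)(a := t)" for x t
    using insert.hyps by (auto simp: fun_eq_iff)
  have "(\<integral>\<^sup>+ yA. ennreal (?D I (\<lambda>i. if i \<in> insert a A then yA i else y i)) \<partial>(PiM (insert a A) (\<lambda>_. lborel)))
      = (\<integral>\<^sup>+ x. (\<integral>\<^sup>+ t. ennreal (?D I ((\<lambda>i. if i \<in> A then x i else y i)(a := t))) \<partial>lborel) \<partial>(PiM A (\<lambda>_. lborel)))"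
    unfolding P.product_nn_integral_insert[OF insert.hyps meas] fu ..
  also have "\<dots> = (\<integral>\<^sup>+ x. ennreal (?D (I - {a}) (\<lambda>i. if i \<in> A then x i else y i)) \<partial>(PiM A (\<lambda>_. lborel)))"
    by (intro nn_integral_cong dens_step) (use insert.prems aI in auto)
  also have "\<dots> = ennreal (?D (I - {a} - A) y)"
    by (rule insert.IH) (use insert.prems AI in auto)
  also have "I - {a} - A = I - insert a A" by auto
  finally show ?case .
qed

lemma main_ctx:
  assumes "finite I" "A \<subseteq> I" "\<forall>i\<in>I. qc i \<in> {1..C}"
  shows "(\<integral>\<^sup>+ yA. ennreal (circuits_density C K \<phi> Proj htil g thetaMap Fc fd wroot W X qt qc I
                        (\<lambda>i. if i \<in> A then yA i else y i)) \<partial>(PiM A (\<lambda>_. lborel)))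
         = ennreal (circuits_density C K \<phi> Proj htil g thetaMap Fc fd wroot W X qt qc (I - A) y)"
  unfolding dens_eq
  by (rule dens_marg[OF finite_subset[OF assms(2,1)] assms])

end

theorem mainTheorem4:
  fixes \<phi> :: "real \<Rightarrow> 'a" and Proj :: "'a \<times> 'b \<Rightarrow> nat \<Rightarrow> 'e"
    and htil :: "(real \<times> nat \<times> real) list \<Rightarrow> nat \<Rightarrow> 'b"
    and g :: "'e \<Rightarrow> real^'h" and thetaMap :: "'e \<Rightarrow> 't"
    and Fc fd :: "'t \<Rightarrow> real \<Rightarrow> real"
    and C K :: nat
    and wroot :: "(real \<times> nat \<times> real) list \<Rightarrow> nat \<Rightarrow> real"
    and W :: "(real \<times> nat \<times> real) list \<Rightarrow> nat \<Rightarrow> nat \<times> nat \<Rightarrow> nat \<Rightarrow> real"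
    and X :: "(real \<times> nat \<times> real) list"
    and qt :: "'q \<Rightarrow> real" and qc :: "'q \<Rightarrow> nat"
    and I A :: "'q set" and y :: "'q \<Rightarrow> real"
  assumes C_pos: "C \<ge> 1" and K_pos: "K \<ge> 1"
    and F_mono: "\<And>\<theta>. strict_mono (Fc \<theta>)"
    and F_deriv: "\<And>\<theta> x. (Fc \<theta> has_real_derivative fd \<theta> x) (at x)"
    and f_cont: "\<And>\<theta>. continuous_on UNIV (fd \<theta>)"
    and F_bot: "\<And>\<theta>. (Fc \<theta> \<longlongrightarrow> 0) at_bot"
    and F_top: "\<And>\<theta>. (Fc \<theta> \<longlongrightarrow> 1) at_top"
    and wroot_nonneg: "\<And>Xs k. k \<in> {1..K} \<Longrightarrow> wroot Xs k \<ge> 0"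
    and wroot_sum: "\<And>Xs. (\<Sum>k\<in>{1..K}. wroot Xs k) = 1"
    and W_nonneg: "\<And>Xs c i j k. c \<in> {2..C} \<Longrightarrow> i \<in> {1..K} \<Longrightarrow> j \<in> {1..K} \<Longrightarrow> k \<in> {1..K}
                     \<Longrightarrow> W Xs c (i, j) k \<ge> 0"
    and W_sum: "\<And>Xs c k. c \<in> {2..C} \<Longrightarrow> k \<in> {1..K}
                     \<Longrightarrow> (\<Sum>ij\<in>{1..K} \<times> {1..K}. W Xs c ij k) = 1"
    and I_fin: "finite I"
    and I_chan: "\<forall>i\<in>I. qc i \<in> {1..C}"
    and A_sub: "A \<subseteq> I"
  shows "(\<integral>\<^sup>+ yA. ennreal (circuits_density C K \<phi> Proj htil g thetaMap Fc fd wroot W X qt qc I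
                        (\<lambda>i. if i \<in> A then yA i else y i)) \<partial>(PiM A (\<lambda>_. lborel)))
         = ennreal (circuits_density C K \<phi> Proj htil g thetaMap Fc fd wroot W X qt qc (I - A) y)"
  apply (rule main_ctx)
  using F_mono F_deriv f_cont F_bot F_top wroot_nonneg W_nonneg I_fin A_sub I_chan
  apply blast+
  done

end
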